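(* Let $T$ be a tree on $n\ge 4$ vertices. Then \[\left\lceil\frac{n+1}{3}\right\rceil \le f(T)\le \left\lfloor\frac{2(n-1)}{3}\right\rfloor.\] Furthermore, these bounds are best possible: there are infinitely many trees attaining the lower bound with equality, and infinitely many trees attaining the upper bound with equality.
   Context: For a graph $G$, a family $\mathcal{P}$ of subsets of $E(G)$ is a separating path system of $G$ if every member of $\mathcal{P}$ is (the edge set of) a path in $G$, and for every pair of distinct edges $e,e'\in E(G)$ there is some $P\in\mathcal{P}$ containing exactly one of $e,e'$. $f(G)$ denotes the minimum size of a separating path system of $G$. *)

theory Defs
  imports Complex_Main
begin

definition simple_graph :: "'a set \<Rightarrow> 'a set set \<Rightarrow> bool" where
  "simple_graph V E \<longleftrightarrow> finite V \<and>
     (\<forall>e\<in>E. \<exists>u v. e = {u, v} \<and> u \<noteq> v \<and> u \<in> V \<and> v \<in> V)"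

definition is_walk :: "'a set \<Rightarrow> 'a set set \<Rightarrow> 'a list \<Rightarrow> bool" where
  "is_walk V E vs \<longleftrightarrow> vs \<noteq> [] \<and> set vs \<subseteq> V \<and>
     (\<forall>i. Suc i < length vs \<longrightarrow> {vs ! i, vs ! Suc i} \<in> E)"

definition is_vpath :: "'a set \<Rightarrow> 'a set set \<Rightarrow> 'a list \<Rightarrow> bool" where
  "is_vpath V E vs \<longleftrightarrow> is_walk V E vs \<and> distinct vs"

definition path_edges :: "'a list \<Rightarrow> 'a set set" where
  "path_edges vs = {{vs ! i, vs ! Suc i} | i. Suc i < length vs}"

definition connected_graph :: "'a set \<Rightarrow> 'a set set \<Rightarrow> bool" where
  "connected_graph V E \<longleftrightarrow> V \<noteq> {} \<and>
     (\<forall>u\<in>V. \<forall>v\<in>V. \<exists>vs. is_vpath V E vs \<and> hd vs = u \<and> last vs = v)"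

definition has_cycle :: "'a set \<Rightarrow> 'a set set \<Rightarrow> bool" where
  "has_cycle V E \<longleftrightarrow> (\<exists>vs. is_vpath V E vs \<and> length vs \<ge> 3 \<and> {last vs, hd vs} \<in> E)"

definition is_tree :: "'a set \<Rightarrow> 'a set set \<Rightarrow> bool" where
  "is_tree V E \<longleftrightarrow> simple_graph V E \<and> connected_graph V E \<and> \<not> has_cycle V E"

definition is_path_edge_set :: "'a set \<Rightarrow> 'a set set \<Rightarrow> 'a set set \<Rightarrow> bool" where
  "is_path_edge_set V E P \<longleftrightarrow> (\<exists>vs. is_vpath V E vs \<and> P = path_edges vs)"

definition separating_path_system :: "'a set \<Rightarrow> 'a set set \<Rightarrow> 'a set set set \<Rightarrow> bool" where
  "separating_path_system V E \<P> \<longleftrightarrow> (\<forall>P\<in>\<P>. is_path_edge_set V E P) \<and>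
     (\<forall>e\<in>E. \<forall>e'\<in>E. e \<noteq> e' \<longrightarrow> (\<exists>P\<in>\<P>. (e \<in> P) \<noteq> (e' \<in> P)))"

definition f_sep :: "'a set \<Rightarrow> 'a set set \<Rightarrow> nat" where
  "f_sep V E = (LEAST k. \<exists>\<P>. finite \<P> \<and> card \<P> = k \<and> separating_path_system V E \<P>)"

end

theory Submission
  imports Defs
begin

lemma card_filter_sum: "finite A \<Longrightarrow> card {x\<in>A. P x} = (\<Sum>x\<in>A. if P x then 1 else 0::nat)"
  by (simp add: sum.If_cases Int_def)

lemma is_walk_alt: "is_walk V E vs \<longleftrightarrow> vs \<noteq> [] \<and> set vs \<subseteq> V \<and> path_edges vs \<subseteq> E"
  unfolding is_walk_def path_edges_def by blast

lemma path_edges_Nil[simp]: "path_edges [] = {}"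
  unfolding path_edges_def by simp

lemma path_edges_single[simp]: "path_edges [a] = {}"
  unfolding path_edges_def by simp

lemma path_edges_Cons2[simp]: "path_edges (a # b # vs) = insert {a,b} (path_edges (b # vs))"
  unfolding path_edges_def
proof (intro set_eqI iffI)
  fix x assume "x \<in> {{(a # b # vs) ! i, (a # b # vs) ! Suc i} |i. Suc i < length (a # b # vs)}"
  then obtain i where i: "x = {(a # b # vs) ! i, (a # b # vs) ! Suc i}" "Suc i < length (a # b # vs)" by blast
  show "x \<in> insert {a, b} {{(b # vs) ! i, (b # vs) ! Suc i} |i. Suc i < length (b # vs)}"
  proof (cases i)
    case 0 then show ?thesis using i by simp
  next
    case (Suc j) then show ?thesis using i by auto
  qed
next
  fix x assume "x \<in> insert {a, b} {{(b # vs) ! i, (b # vs) ! Suc i} |i. Suc i < length (b # vs)}"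
  then show "x \<in> {{(a # b # vs) ! i, (a # b # vs) ! Suc i} |i. Suc i < length (a # b # vs)}"
  proof
    assume "x = {a,b}" then show ?thesis by (auto intro!: exI[of _ 0])
  next
    assume "x \<in> {{(b # vs) ! i, (b # vs) ! Suc i} |i. Suc i < length (b # vs)}"
    then obtain i where "x = {(b # vs) ! i, (b # vs) ! Suc i}" "Suc i < length (b # vs)" by blast
    then show ?thesis by (auto intro!: exI[of _ "Suc i"])
  qed
qed

lemma path_edges_Cons: "vs \<noteq> [] \<Longrightarrow> path_edges (a # vs) = insert {a, hd vs} (path_edges vs)"
  by (cases vs) auto

lemma path_edges_append:
  "xs \<noteq> [] \<Longrightarrow> ys \<noteq> [] \<Longrightarrow> path_edges (xs @ ys) = path_edges xs \<union> path_edges ys \<union> {{last xs, hd ys}}"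
proof (induction xs rule: list_nonempty_induct)
  case (single x) then show ?case by (simp add: path_edges_Cons)
next
  case (cons x xs) then show ?case by (auto simp: path_edges_Cons)
qed

lemma path_edges_image: "path_edges vs = (\<lambda>i. {vs ! i, vs ! Suc i}) ` {..<length vs - 1}"
  unfolding path_edges_def by auto

lemma finite_path_edges[simp]: "finite (path_edges vs)"
  by (simp add: path_edges_image)

lemma path_edges_subset: "e \<in> path_edges vs \<Longrightarrow> e \<subseteq> set vs"
  unfolding path_edges_def by auto

lemma card_path_edges: "card (path_edges vs) \<le> length vs - 1"
  unfolding path_edges_image using card_image_le[of "{..<length vs - 1}"] by simp


lemma simple_edge:
  "simple_graph V E \<Longrightarrow> e \<in> E \<Longrightarrow> \<exists>u v. e = {u,v} \<and> u \<noteq> v \<and> u \<in> V \<and> v \<in> V"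
  unfolding simple_graph_def by blast

lemma simple_edge_sub: "simple_graph V E \<Longrightarrow> e \<in> E \<Longrightarrow> e \<subseteq> V"
  using simple_edge by blast

lemma simple_finite_V: "simple_graph V E \<Longrightarrow> finite V"
  unfolding simple_graph_def by blast

lemma simple_finite_E: "simple_graph V E \<Longrightarrow> finite E"
proof -
  assume s: "simple_graph V E"
  then have "E \<subseteq> Pow V" using simple_edge_sub by blast
  then show ?thesis using simple_finite_V[OF s] finite_subset by blast
qed

lemma simple_edge_other:
  assumes "simple_graph V E" "e \<in> E" "v \<in> e"
  shows "\<exists>w. e = {v,w} \<and> w \<noteq> v \<and> w \<in> V \<and> v \<in> V"
  using simple_edge[OF assms(1,2)] assms(3) by auto

lemma vpath_lift: "is_vpath V' E' vs \<Longrightarrow> V' \<subseteq> V \<Longrightarrow> E' \<subseteq> E \<Longrightarrow> is_vpath V E vs"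
  unfolding is_vpath_def is_walk_alt by blast

lemma path_edge_set_lift:
  "is_path_edge_set V' E' P \<Longrightarrow> V' \<subseteq> V \<Longrightarrow> E' \<subseteq> E \<Longrightarrow> is_path_edge_set V E P"
  unfolding is_path_edge_set_def using vpath_lift by blast

lemma path_edge_set_sub: "is_path_edge_set V E P \<Longrightarrow> P \<subseteq> E"
  unfolding is_path_edge_set_def is_vpath_def is_walk_alt by blast

lemma vpath_edge: "is_vpath V E vs \<Longrightarrow> Suc i < length vs \<Longrightarrow> {vs ! i, vs ! Suc i} \<in> E"
  unfolding is_vpath_def is_walk_def by blast

lemma connected_closed:
  assumes c: "connected_graph V E" and S: "S \<subseteq> V" "s \<in> S"
    and cl: "\<forall>e\<in>E. \<forall>x\<in>e. x \<in> S \<longrightarrow> e \<subseteq> S"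
  shows "S = V"
proof
  show "V \<subseteq> S"
  proof
    fix z assume z: "z \<in> V"
    from c S z obtain vs where vs: "is_vpath V E vs" "hd vs = s" "last vs = z"
      unfolding connected_graph_def by blast
    have ne: "vs \<noteq> []" using vs(1) unfolding is_vpath_def is_walk_def by blast
    have "\<forall>i<length vs. vs ! i \<in> S"
    proof (intro allI impI)
      fix i assume "i < length vs"
      then show "vs ! i \<in> S"
      proof (induction i)
        case 0 then show ?case using vs(2) S ne by (simp add: hd_conv_nth)
      next
        case (Suc i)
        then have "vs ! i \<in> S" by simp
        moreover have "{vs ! i, vs ! Suc i} \<in> E" using vpath_edge[OF vs(1)] Suc.prems by blast
        ultimately have "{vs ! i, vs ! Suc i} \<subseteq> S" using cl[rule_format, of "{vs ! i, vs ! Suc i}" "vs ! i"] by simp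
        then show ?case by simp
      qed
    qed
    moreover have "length vs - 1 < length vs" using ne by simp
    ultimately have "vs ! (length vs - 1) \<in> S" by blast
    then show "z \<in> S" using vs(3) ne by (simp add: last_conv_nth)
  qed
qed (rule S(1))

lemma vpath_ne: "is_vpath V E vs \<Longrightarrow> vs \<noteq> []"
  unfolding is_vpath_def is_walk_def by blast

lemma vpath_distinct: "is_vpath V E vs \<Longrightarrow> distinct vs"
  unfolding is_vpath_def by blast

lemma vpath_set: "is_vpath V E vs \<Longrightarrow> set vs \<subseteq> V"
  unfolding is_vpath_def is_walk_def by blast

lemma vpath_length_le: "is_vpath V E vs \<Longrightarrow> finite V \<Longrightarrow> length vs \<le> card V"
proof -
  assume a: "is_vpath V E vs" "finite V"
  have "length vs = card (set vs)" using distinct_card[OF vpath_distinct[OF a(1)]] by simp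
  also have "\<dots> \<le> card V" using card_mono[OF a(2) vpath_set[OF a(1)]] .
  finally show ?thesis .
qed

lemma path_edges_drop: "path_edges (drop j vs) \<subseteq> path_edges vs"
proof
  fix e assume "e \<in> path_edges (drop j vs)"
  then obtain i where "e = {drop j vs ! i, drop j vs ! Suc i}" "Suc i < length (drop j vs)"
    unfolding path_edges_def by blast
  then have "e = {vs ! (j+i), vs ! Suc (j+i)}" "Suc (j+i) < length vs" by auto
  then show "e \<in> path_edges vs" unfolding path_edges_def by blast
qed

lemma is_vpath_iff: "is_vpath V E vs \<longleftrightarrow> vs \<noteq> [] \<and> set vs \<subseteq> V \<and> path_edges vs \<subseteq> E \<and> distinct vs"
  unfolding is_vpath_def is_walk_alt by (rule iffI) (elim conjE; intro conjI; assumption)+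

lemma is_vpathI: "vs \<noteq> [] \<Longrightarrow> set vs \<subseteq> V \<Longrightarrow> path_edges vs \<subseteq> E \<Longrightarrow> distinct vs \<Longrightarrow> is_vpath V E vs"
  using is_vpath_iff by blast

lemma vpath_pe: "is_vpath V E vs \<Longrightarrow> path_edges vs \<subseteq> E"
  using is_vpath_iff by blast

lemma vpath_drop: "is_vpath V E vs \<Longrightarrow> j < length vs \<Longrightarrow> is_vpath V E (drop j vs)"
proof (rule is_vpathI)
  assume a: "is_vpath V E vs" "j < length vs"
  show "drop j vs \<noteq> []" using a(2) by simp
  show "set (drop j vs) \<subseteq> V" using vpath_set[OF a(1)] set_drop_subset by (rule order_trans[rotated])
  show "path_edges (drop j vs) \<subseteq> E" using path_edges_drop vpath_pe[OF a(1)] by (rule order_trans)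
  show "distinct (drop j vs)" using vpath_distinct[OF a(1)] by simp
qed

lemma vpath_snoc:
  assumes "is_vpath V E vs" "z \<in> V" "z \<notin> set vs" "{last vs, z} \<in> E"
  shows "is_vpath V E (vs @ [z])"
proof (rule is_vpathI)
  have ne: "vs \<noteq> []" using vpath_ne[OF assms(1)] .
  show "vs @ [z] \<noteq> []" by simp
  show "set (vs @ [z]) \<subseteq> V" using vpath_set[OF assms(1)] assms(2) by simp
  show "path_edges (vs @ [z]) \<subseteq> E" using vpath_pe[OF assms(1)] assms(4) ne
    by (simp add: path_edges_append)
  show "distinct (vs @ [z])" using vpath_distinct[OF assms(1)] assms(3) by simp
qed

lemma vpath_Cons:
  assumes "is_vpath V E vs" "z \<in> V" "z \<notin> set vs" "{z, hd vs} \<in> E"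
  shows "is_vpath V E (z # vs)"
proof (rule is_vpathI)
  have ne: "vs \<noteq> []" using vpath_ne[OF assms(1)] .
  show "z # vs \<noteq> []" by simp
  show "set (z # vs) \<subseteq> V" using vpath_set[OF assms(1)] assms(2) by simp
  show "path_edges (z # vs) \<subseteq> E" using vpath_pe[OF assms(1)] assms(4) ne
    by (simp add: path_edges_Cons)
  show "distinct (z # vs)" using vpath_distinct[OF assms(1)] assms(3) by simp
qed


lemma vpath_hd_last_ne:
  assumes "is_vpath V E vs" "hd vs \<noteq> last vs"
  shows "length vs \<ge> 2"
proof (rule ccontr)
  assume "\<not> length vs \<ge> 2"
  moreover have "vs \<noteq> []" using vpath_ne[OF assms(1)] .
  ultimately obtain a where "vs = [a]" by (cases vs; cases "tl vs") auto
  then show False using assms(2) by simp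
qed

lemma tree_leaf:
  assumes T: "is_tree V E" and n: "card V \<ge> 2"
  shows "\<exists>x y. x \<in> V \<and> y \<in> V \<and> x \<noteq> y \<and> {x,y} \<in> E \<and> (\<forall>e\<in>E. y \<in> e \<longrightarrow> e = {x,y})
           \<and> is_tree (V - {y}) (E - {{x,y}})"
proof -
  have sg: "simple_graph V E" and cg: "connected_graph V E" and nc: "\<not> has_cycle V E"
    using T unfolding is_tree_def by auto
  have fV: "finite V" using simple_finite_V[OF sg] .
  obtain u w where uw: "u \<in> V" "w \<in> V" "u \<noteq> w"
  proof -
    have "\<not> (\<forall>a\<in>V. \<forall>b\<in>V. a = b)"
    proof
      assume "\<forall>a\<in>V. \<forall>b\<in>V. a = b"
      then have "card V \<le> 1" by (simp add: card_le_Suc0_iff_eq[OF fV])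
      then show False using n by simp
    qed
    then show ?thesis using that by blast
  qed
  obtain ws where ws: "is_vpath V E ws" "hd ws = u" "last ws = w"
    using cg uw unfolding connected_graph_def by blast
  obtain vs where vs: "is_vpath V E vs" and mx: "\<forall>zs. is_vpath V E zs \<longrightarrow> length zs \<le> length vs"
    using Lattices_Big.ex_has_greatest_nat[of "is_vpath V E" ws length "card V + 1"]
      ws(1) vpath_length_le[OF _ fV] by (metis le_imp_less_Suc Suc_eq_plus1)
  define M where "M = length vs"
  have "length ws \<ge> 2" using vpath_hd_last_ne[OF ws(1)] ws uw by simp
  then have M2: "M \<ge> 2" using mx ws(1) unfolding M_def by (meson order_trans)
  have dv: "distinct vs" using vpath_distinct[OF vs] .
  define y where "y = vs ! (M - 1)"
  define x where "x = vs ! (M - 2)"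
  have ylast: "y = last vs" using M2 vpath_ne[OF vs] unfolding y_def M_def by (simp add: last_conv_nth)
  have xy: "{x,y} \<in> E" using vpath_edge[OF vs, of "M - 2"] M2 unfolding x_def y_def M_def
    by (simp add: Suc_diff_Suc numeral_2_eq_2)
  have xney: "x \<noteq> y" using dv M2 unfolding x_def y_def M_def by (simp add: nth_eq_iff_index_eq)
  have xV: "x \<in> V" and yV: "y \<in> V" using vpath_set[OF vs] M2 unfolding x_def y_def M_def by auto
  have leaf: "\<forall>e\<in>E. y \<in> e \<longrightarrow> e = {x,y}"
  proof (intro ballI impI)
    fix e assume eE: "e \<in> E" and ye: "y \<in> e"
    obtain z where z: "e = {y,z}" "z \<noteq> y" "z \<in> V" using simple_edge_other[OF sg eE ye] by blast
    show "e = {x,y}"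
    proof (cases "z \<in> set vs")
      case False
      have "is_vpath V E (vs @ [z])" using vpath_snoc[OF vs z(3) False] eE z(1) ylast by simp
      then have "length (vs @ [z]) \<le> length vs" using mx by blast
      then show ?thesis by simp
    next
      case True
      then obtain j where j: "j < M" "vs ! j = z" unfolding M_def by (metis in_set_conv_nth)
      have "j \<noteq> M - 1" using j z(2) unfolding y_def by auto
      show ?thesis
      proof (cases "j = M - 2")
        case True then show ?thesis using j z(1) unfolding x_def by auto
      next
        case False
        with \<open>j \<noteq> M - 1\<close> j have jl: "j + 3 \<le> M" by simp
        have cyc: "is_vpath V E (drop j vs)" using vpath_drop[OF vs] j unfolding M_def by simp
        have "hd (drop j vs) = z" using j unfolding M_def by (simp add: hd_drop_conv_nth)
        moreover have "last (drop j vs) = y" using j ylast unfolding M_def by simp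
        moreover have "length (drop j vs) \<ge> 3" using jl unfolding M_def by simp
        ultimately have "has_cycle V E" unfolding has_cycle_def using cyc eE z(1)
          by (metis insert_commute)
        then show ?thesis using nc by simp
      qed
    qed
  qed
  define V' where "V' = V - {y}"
  define E' where "E' = E - {{x,y}}"
  have noy: "\<forall>e\<in>E'. y \<notin> e" using leaf unfolding E'_def by blast
  have sg': "simple_graph V' E'"
    unfolding simple_graph_def
  proof
    show "finite V'" using fV unfolding V'_def by simp
    show "\<forall>e\<in>E'. \<exists>u v. e = {u, v} \<and> u \<noteq> v \<and> u \<in> V' \<and> v \<in> V'"
    proof
      fix e assume eE': "e \<in> E'"
      then have "e \<in> E" unfolding E'_def by simp
      then obtain a b where "e = {a,b}" "a \<noteq> b" "a \<in> V" "b \<in> V" using simple_edge[OF sg] by blast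
      moreover have "y \<notin> e" using noy eE' by blast
      ultimately show "\<exists>u v. e = {u, v} \<and> u \<noteq> v \<and> u \<in> V' \<and> v \<in> V'" unfolding V'_def by blast
    qed
  qed
  have cg': "connected_graph V' E'"
    unfolding connected_graph_def
  proof (intro conjI ballI)
    show "V' \<noteq> {}" using xV xney unfolding V'_def by blast
  next
    fix a b assume a: "a \<in> V'" and b: "b \<in> V'"
    obtain zs where zs: "is_vpath V E zs" "hd zs = a" "last zs = b"
      using cg a b unfolding connected_graph_def V'_def by blast
    have ynot: "y \<notin> set zs"
    proof
      assume "y \<in> set zs"
      then obtain i where i: "i < length zs" "zs ! i = y" by (metis in_set_conv_nth)
      have zne: "zs \<noteq> []" using vpath_ne[OF zs(1)] .
      have "i \<noteq> 0"
      proof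
        assume "i = 0" then have "hd zs = y" using i zne by (simp add: hd_conv_nth)
        then show False using zs(2) a unfolding V'_def by simp
      qed
      moreover have "i \<noteq> length zs - 1"
      proof
        assume "i = length zs - 1" then have "last zs = y" using i zne by (simp add: last_conv_nth)
        then show False using zs(3) b unfolding V'_def by simp
      qed
      ultimately have i1: "0 < i" "Suc i < length zs" using i by auto
      have e1: "{zs ! (i - 1), y} \<in> E" using vpath_edge[OF zs(1), of "i - 1"] i1 i by simp
      have e2: "{y, zs ! Suc i} \<in> E" using vpath_edge[OF zs(1), of i] i1 i by simp
      have dz: "distinct zs" using vpath_distinct[OF zs(1)] .
      have n1: "zs ! (i - 1) \<noteq> y" using i i1 nth_eq_iff_index_eq[OF dz, of "i - 1" i] by auto
      have n2: "zs ! Suc i \<noteq> y" using i i1 nth_eq_iff_index_eq[OF dz, of "Suc i" i] by auto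
      have "{zs ! (i - 1), y} = {x,y}" using leaf e1 by blast
      then have p1: "zs ! (i - 1) = x" using n1 by (auto simp: doubleton_eq_iff)
      have "{y, zs ! Suc i} = {x,y}" using leaf e2 by blast
      then have p2: "zs ! Suc i = x" using n2 by (auto simp: doubleton_eq_iff)
      have "zs ! (i - 1) = zs ! Suc i" using p1 p2 by simp
      moreover have "i - 1 < length zs" using i1 by simp
      ultimately have "i - 1 = Suc i" using i1 nth_eq_iff_index_eq[OF dz, of "i - 1" "Suc i"] by simp
      then show False using i1 by simp
    qed
    have "is_vpath V' E' zs"
    proof (rule is_vpathI)
      show "zs \<noteq> []" using vpath_ne[OF zs(1)] .
      show "set zs \<subseteq> V'" using vpath_set[OF zs(1)] ynot unfolding V'_def by blast
      show "distinct zs" using vpath_distinct[OF zs(1)] .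
      show "path_edges zs \<subseteq> E'"
      proof
        fix e assume e: "e \<in> path_edges zs"
        then have "e \<in> E" using vpath_pe[OF zs(1)] by blast
        moreover have "y \<notin> e" using path_edges_subset[OF e] ynot by blast
        ultimately show "e \<in> E'" unfolding E'_def by blast
      qed
    qed
    then show "\<exists>vs. is_vpath V' E' vs \<and> hd vs = a \<and> last vs = b" using zs by blast
  qed
  have nc': "\<not> has_cycle V' E'"
  proof
    assume "has_cycle V' E'"
    then obtain cs where "is_vpath V' E' cs" "length cs \<ge> 3" "{last cs, hd cs} \<in> E'"
      unfolding has_cycle_def by blast
    moreover have "V' \<subseteq> V" "E' \<subseteq> E" unfolding V'_def E'_def by auto
    ultimately have "has_cycle V E" unfolding has_cycle_def using vpath_lift by blast
    then show False using nc by simp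
  qed
  have "is_tree V' E'" unfolding is_tree_def using sg' cg' nc' by simp
  then show ?thesis using xV yV xney xy leaf unfolding V'_def E'_def by blast
qed


lemma tree_simple: "is_tree V E \<Longrightarrow> simple_graph V E" unfolding is_tree_def by simp
lemma tree_conn: "is_tree V E \<Longrightarrow> connected_graph V E" unfolding is_tree_def by simp
lemma tree_finite_E: "is_tree V E \<Longrightarrow> finite E" using simple_finite_E tree_simple by blast
lemma tree_finite_V: "is_tree V E \<Longrightarrow> finite V" using simple_finite_V tree_simple by blast

lemma tree_card_E: "is_tree V E \<Longrightarrow> card E = card V - 1"
proof (induction "card V" arbitrary: V E rule: less_induct)
  case less
  show ?case
  proof (cases "card V \<ge> 2")
    case False
    have "E = {}"
    proof (rule ccontr)
      assume "E \<noteq> {}"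
      then obtain e where "e \<in> E" by blast
      then obtain u v where uv: "u \<noteq> v" "u \<in> V" "v \<in> V"
        using simple_edge[OF tree_simple[OF less.prems]] by blast
      then have "{u,v} \<subseteq> V" by simp
      then have "card {u,v} \<le> card V" by (rule card_mono[OF tree_finite_V[OF less.prems]])
      then show False using False uv(1) by simp
    qed
    then show ?thesis using False by simp
  next
    case True
    obtain x y where xy: "x \<in> V" "y \<in> V" "x \<noteq> y" "{x,y} \<in> E"
       "is_tree (V - {y}) (E - {{x,y}})" using tree_leaf[OF less.prems True] by blast
    have c1: "card (V - {y}) = card V - 1" using xy(2) tree_finite_V[OF less.prems] by simp
    then have "card (V - {y}) < card V" using True by simp
    then have "card (E - {{x,y}}) = card (V - {y}) - 1" by (rule less.hyps[OF _ xy(5)])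
    moreover have "card (E - {{x,y}}) = card E - 1" using xy(4) tree_finite_E[OF less.prems] by simp
    moreover have "card E \<ge> 1" using xy(4) tree_finite_E[OF less.prems] card_gt_0_iff[of E]
      by (simp add: Suc_le_eq) blast
    ultimately show ?thesis using c1 True by simp
  qed
qed

lemma tree_card_V_E: "is_tree V E \<Longrightarrow> card V = card E + 1"
proof -
  assume T: "is_tree V E"
  have "V \<noteq> {}" using tree_conn[OF T] unfolding connected_graph_def by blast
  then have "card V \<ge> 1" using tree_finite_V[OF T] by (simp add: Suc_leI card_gt_0_iff)
  then show ?thesis using tree_card_E[OF T] by simp
qed

lemma tree_E_ne_card: "is_tree V E \<Longrightarrow> E \<noteq> {} \<Longrightarrow> card V \<ge> 2"
proof -
  assume T: "is_tree V E" and ne: "E \<noteq> {}"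
  have "card E > 0" using ne tree_finite_E[OF T] by (simp add: card_gt_0_iff)
  then show ?thesis using tree_card_V_E[OF T] by simp
qed

lemma tree_leaf_edge:
  assumes "is_tree V E" "E \<noteq> {}"
  shows "\<exists>x y. x \<in> V - {y} \<and> y \<in> V \<and> {x,y} \<in> E \<and> (\<forall>e\<in>E - {{x,y}}. y \<notin> e)
           \<and> is_tree (V - {y}) (E - {{x,y}}) \<and> card (E - {{x,y}}) = card E - 1"
proof -
  obtain x y where xy: "x \<in> V" "y \<in> V" "x \<noteq> y" "{x,y} \<in> E" "\<forall>e\<in>E. y \<in> e \<longrightarrow> e = {x,y}"
       "is_tree (V - {y}) (E - {{x,y}})" using tree_leaf[OF assms(1) tree_E_ne_card[OF assms]] by blast
  have "card (E - {{x,y}}) = card E - 1" using xy(4) tree_finite_E[OF assms(1)] by simp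
  then show ?thesis using xy by blast
qed

lemma cycle_two_nbrs:
  assumes p: "is_vpath V E vs" and l: "length vs \<ge> 3" and c: "{last vs, hd vs} \<in> E" and v: "v \<in> set vs"
  shows "\<exists>p q. p \<noteq> q \<and> p \<noteq> v \<and> q \<noteq> v \<and> {p,v} \<in> E \<and> {v,q} \<in> E"
proof -
  have d: "distinct vs" using vpath_distinct[OF p] .
  obtain i where i: "i < length vs" "vs ! i = v" using v by (metis in_set_conv_nth)
  have ne: "vs \<noteq> []" using l by auto
  have hd0: "hd vs = vs ! 0" using ne by (simp add: hd_conv_nth)
  have lst: "last vs = vs ! (length vs - 1)" using ne by (simp add: last_conv_nth)
  have neq: "\<And>a b. a < length vs \<Longrightarrow> b < length vs \<Longrightarrow> a \<noteq> b \<Longrightarrow> vs ! a \<noteq> vs ! b"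
    using d by (simp add: nth_eq_iff_index_eq)
  consider (z) "i = 0" | (m) "0 < i" "i < length vs - 1" | (e) "i = length vs - 1" using i by linarith
  then show ?thesis
  proof cases
    case z
    have "{vs ! (length vs - 1), v} \<in> E" using c lst hd0 i z by simp
    moreover have "{v, vs ! 1} \<in> E" using vpath_edge[OF p, of 0] l i z by simp
    moreover have "vs ! (length vs - 1) \<noteq> vs ! 1" using neq[of "length vs - 1" 1] l by simp
    moreover have "vs ! (length vs - 1) \<noteq> v" using neq[of "length vs - 1" 0] l i z by simp
    moreover have "vs ! 1 \<noteq> v" using neq[of 1 0] l i z by simp
    ultimately show ?thesis by blast
  next
    case m
    have "{vs ! (i - 1), v} \<in> E" using vpath_edge[OF p, of "i - 1"] m i by simp
    moreover have "{v, vs ! Suc i} \<in> E" using vpath_edge[OF p, of i] m i by simp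
    moreover have "vs ! (i - 1) \<noteq> vs ! Suc i" using neq[of "i - 1" "Suc i"] m by simp
    moreover have "vs ! (i - 1) \<noteq> v" using neq[of "i - 1" i] m i by simp
    moreover have "vs ! Suc i \<noteq> v" using neq[of "Suc i" i] m i by simp
    ultimately show ?thesis by blast
  next
    case e
    have si: "Suc (i - 1) = i" "Suc (i - 1) < length vs" using e l by auto
    have "{vs ! (i - 1), v} \<in> E" using vpath_edge[OF p, of "i - 1"] si i(2) by simp
    moreover have "{v, vs ! 0} \<in> E" using c lst hd0 i e by (simp add: insert_commute)
    moreover have "vs ! (i - 1) \<noteq> vs ! 0" using neq[of "i - 1" 0] e l ne by simp
    moreover have "vs ! (i - 1) \<noteq> v" using neq[of "i - 1" i] e i l ne by simp
    moreover have "vs ! 0 \<noteq> v" using neq[of 0 i] e i l ne by simp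
    ultimately show ?thesis by blast
  qed
qed

lemma tree_add_leaf:
  assumes T: "is_tree V E" and x: "x \<in> V" and y: "y \<notin> V"
  shows "is_tree (insert y V) (insert {x,y} E)"
proof -
  have sg: "simple_graph V E" and cg: "connected_graph V E" and nc: "\<not> has_cycle V E"
    using T unfolding is_tree_def by auto
  have xy: "x \<noteq> y" using x y by blast
  have Esub: "\<forall>e\<in>E. e \<subseteq> V" using simple_edge_sub[OF sg] by blast
  have sg': "simple_graph (insert y V) (insert {x,y} E)"
    unfolding simple_graph_def
  proof
    show "finite (insert y V)" using simple_finite_V[OF sg] by simp
    show "\<forall>e\<in>insert {x, y} E. \<exists>u v. e = {u, v} \<and> u \<noteq> v \<and> u \<in> insert y V \<and> v \<in> insert y V"
    proof
      fix e assume "e \<in> insert {x,y} E"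
      then show "\<exists>u v. e = {u, v} \<and> u \<noteq> v \<and> u \<in> insert y V \<and> v \<in> insert y V"
      proof
        assume "e = {x,y}" then show ?thesis using xy x by blast
      next
        assume "e \<in> E" then obtain u v where "e = {u, v}" "u \<noteq> v" "u \<in> V" "v \<in> V"
          using simple_edge[OF sg] by blast
        then show ?thesis by blast
      qed
    qed
  qed
  have lift: "\<And>vs. is_vpath V E vs \<Longrightarrow> is_vpath (insert y V) (insert {x,y} E) vs"
    using vpath_lift[OF _ subset_insertI subset_insertI] .
  have cg': "connected_graph (insert y V) (insert {x,y} E)"
    unfolding connected_graph_def
  proof (intro conjI ballI)
    show "insert y V \<noteq> {}" by simp
  next
    fix a b assume a: "a \<in> insert y V" and b: "b \<in> insert y V"
    show "\<exists>vs. is_vpath (insert y V) (insert {x, y} E) vs \<and> hd vs = a \<and> last vs = b"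
    proof (cases "a = y")
      case ay: True
      show ?thesis
      proof (cases "b = y")
        case True
        have "is_vpath (insert y V) (insert {x, y} E) [y]" by (rule is_vpathI) auto
        then show ?thesis using ay True by (intro exI[of _ "[y]"]) simp
      next
        case False
        then have bV: "b \<in> V" using b by simp
        obtain ws where ws: "is_vpath V E ws" "hd ws = x" "last ws = b" using cg x bV
          unfolding connected_graph_def by blast
        have "is_vpath (insert y V) (insert {x, y} E) (y # ws)"
          using vpath_Cons[OF lift[OF ws(1)], of y] vpath_set[OF ws(1)] y ws(2) by (auto simp: insert_commute)
        then show ?thesis using ay ws vpath_ne[OF ws(1)] by (intro exI[of _ "y # ws"]) simp
      qed
    next
      case anY: False
      then have aV: "a \<in> V" using a by simp
      show ?thesis
      proof (cases "b = y")
        case True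
        obtain ws where ws: "is_vpath V E ws" "hd ws = a" "last ws = x" using cg x aV
          unfolding connected_graph_def by blast
        have "is_vpath (insert y V) (insert {x, y} E) (ws @ [y])"
          using vpath_snoc[OF lift[OF ws(1)], of y] vpath_set[OF ws(1)] y ws(3) by auto
        then show ?thesis using True ws vpath_ne[OF ws(1)] by (intro exI[of _ "ws @ [y]"]) simp
      next
        case False
        then have bV: "b \<in> V" using b by simp
        obtain ws where ws: "is_vpath V E ws" "hd ws = a" "last ws = b" using cg aV bV
          unfolding connected_graph_def by blast
        then show ?thesis using lift by blast
      qed
    qed
  qed
  have nc': "\<not> has_cycle (insert y V) (insert {x,y} E)"
  proof
    assume "has_cycle (insert y V) (insert {x,y} E)"
    then obtain cs where cs: "is_vpath (insert y V) (insert {x,y} E) cs" "length cs \<ge> 3"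
      "{last cs, hd cs} \<in> insert {x,y} E" unfolding has_cycle_def by blast
    show False
    proof (cases "y \<in> set cs")
      case True
      obtain p q where pq: "p \<noteq> q" "p \<noteq> y" "q \<noteq> y" "{p,y} \<in> insert {x,y} E" "{y,q} \<in> insert {x,y} E"
        using cycle_two_nbrs[OF cs True] by blast
      have "{p,y} \<notin> E" using Esub y by blast
      then have "{p,y} = {x,y}" using pq(4) by blast
      then have "p = x" using pq(2) by (auto simp: doubleton_eq_iff)
      have "{y,q} \<notin> E" using Esub y by blast
      then have "{y,q} = {x,y}" using pq(5) by blast
      then have "q = x" using pq(3) by (auto simp: doubleton_eq_iff)
      then show False using \<open>p = x\<close> pq(1) by simp
    next
      case False
      have ne: "cs \<noteq> []" using vpath_ne[OF cs(1)] .
      have pe: "path_edges cs \<subseteq> E"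
      proof
        fix e assume e: "e \<in> path_edges cs"
        then have "e \<in> insert {x,y} E" using vpath_pe[OF cs(1)] by blast
        moreover have "e \<noteq> {x,y}" using path_edges_subset[OF e] False by blast
        ultimately show "e \<in> E" by blast
      qed
      have "is_vpath V E cs"
        by (rule is_vpathI) (use ne vpath_set[OF cs(1)] False pe vpath_distinct[OF cs(1)] in auto)
      moreover have "{last cs, hd cs} \<in> E"
      proof -
        have "last cs \<noteq> y" "hd cs \<noteq> y" using False ne by auto
        then have "{last cs, hd cs} \<noteq> {x,y}" by (auto simp: doubleton_eq_iff)
        then show ?thesis using cs(3) by blast
      qed
      ultimately have "has_cycle V E" unfolding has_cycle_def using cs(2) by blast
      then show False using nc by simp
    qed
  qed
  show ?thesis unfolding is_tree_def using sg' cg' nc' by simp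
qed

lemma tree_single: "is_tree {a} {}"
proof -
  have "simple_graph {a} {}" unfolding simple_graph_def by simp
  moreover have "connected_graph {a} {}" unfolding connected_graph_def
  proof (intro conjI ballI)
    fix u v assume "u \<in> {a}" "v \<in> {a}"
    moreover have "is_vpath {a} {} [a]" by (rule is_vpathI) auto
    ultimately show "\<exists>vs. is_vpath {a} {} vs \<and> hd vs = u \<and> last vs = v" by auto
  qed simp
  moreover have "\<not> has_cycle {a} {}"
  proof
    assume "has_cycle {a} {}"
    then obtain cs where cs: "is_vpath {a} {} cs" "length cs \<ge> 3" unfolding has_cycle_def by blast
    have "length cs \<le> card {a}" using vpath_length_le[OF cs(1)] by simp
    then show False using cs(2) by simp
  qed
  ultimately show ?thesis unfolding is_tree_def by simp
qed


definition good :: "'a set \<Rightarrow> 'a set set \<Rightarrow> 'a set set set \<Rightarrow> bool" where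
  "good V E \<P> \<longleftrightarrow> finite \<P> \<and> (\<forall>P\<in>\<P>. is_path_edge_set V E P) \<and> (\<forall>e\<in>E. \<exists>P\<in>\<P>. e \<in> P)
     \<and> (\<forall>e\<in>E. \<forall>e'\<in>E. e \<noteq> e' \<longrightarrow> (\<exists>P\<in>\<P>. (e \<in> P) \<noteq> (e' \<in> P)))"

lemma vpath3:
  assumes "p \<in> V" "q \<in> V" "r \<in> V" "p \<noteq> q" "q \<noteq> r" "p \<noteq> r" "{p,q} \<in> E" "{q,r} \<in> E"
  shows "is_vpath V E [p,q,r]" "path_edges [p,q,r] = {{p,q},{q,r}}"
proof -
  show "path_edges [p,q,r] = {{p,q},{q,r}}" by simp
  show "is_vpath V E [p,q,r]" by (rule is_vpathI) (use assms in auto)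
qed

lemma vpath2:
  assumes "p \<in> V" "q \<in> V" "p \<noteq> q" "{p,q} \<in> E"
  shows "is_vpath V E [p,q]" "path_edges [p,q] = {{p,q}}"
proof -
  show "path_edges [p,q] = {{p,q}}" by simp
  show "is_vpath V E [p,q]" by (rule is_vpathI) (use assms in auto)
qed

lemma bridge:
  assumes c: "connected_graph V3 E3" and sub: "V3 \<subseteq> V" "E3 \<subseteq> E"
    and pq: "p \<in> V3" "q \<in> V3" and yy: "y \<in> V" "y \<notin> V3" "y' \<in> V" "y' \<notin> V3" "y \<noteq> y'"
    and ee: "{y,p} \<in> E" "{q,y'} \<in> E"
  shows "\<exists>vs. is_vpath V E vs \<and> path_edges vs \<subseteq> insert {y,p} (insert {q,y'} E3)
            \<and> {y,p} \<in> path_edges vs \<and> {q,y'} \<in> path_edges vs"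
proof -
  obtain ws where ws: "is_vpath V3 E3 ws" "hd ws = p" "last ws = q"
    using c pq unfolding connected_graph_def by blast
  have ne: "ws \<noteq> []" using vpath_ne[OF ws(1)] .
  have wsV: "set ws \<subseteq> V3" using vpath_set[OF ws(1)] .
  have pe: "path_edges (y # (ws @ [y'])) = insert {y,p} (path_edges ws \<union> {{q,y'}})"
    using ne ws(2,3) by (simp add: path_edges_Cons path_edges_append)
  have "is_vpath V E (y # (ws @ [y']))"
  proof (rule is_vpathI)
    show "y # ws @ [y'] \<noteq> []" by simp
    show "set (y # ws @ [y']) \<subseteq> V" using wsV sub yy by auto
    show "path_edges (y # ws @ [y']) \<subseteq> E" using pe vpath_pe[OF ws(1)] sub ee by auto
    show "distinct (y # ws @ [y'])" using vpath_distinct[OF ws(1)] wsV yy by auto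
  qed
  moreover have "path_edges (y # (ws @ [y'])) \<subseteq> insert {y,p} (insert {q,y'} E3)"
    using pe vpath_pe[OF ws(1)] by auto
  ultimately show ?thesis using pe by blast
qed

lemma good_lift_paths:
  "\<forall>P\<in>\<P>. is_path_edge_set V' E' P \<Longrightarrow> V' \<subseteq> V \<Longrightarrow> E' \<subseteq> E \<Longrightarrow> \<forall>P\<in>\<P>. is_path_edge_set V E P"
  using path_edge_set_lift by blast

lemma good_three:
  assumes T: "is_tree V E" and cE: "card E = 3 * q"
  shows "\<exists>\<P>. good V E \<P> \<and> card \<P> \<le> 2 * q"
  using assms
proof (induction q arbitrary: V E)
  case 0
  then have "E = {}" using tree_finite_E[OF "0.prems"(1)] by simp
  then show ?case unfolding good_def by (intro exI[of _ "{}"]) simp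
next
  case (Suc q)
  have T: "is_tree V E" using Suc.prems(1) .
  have ne: "E \<noteq> {}" using Suc.prems(2) by auto
  obtain x3 y3 where s3: "x3 \<in> V - {y3}" "y3 \<in> V" "{x3,y3} \<in> E" "\<forall>e\<in>E - {{x3,y3}}. y3 \<notin> e"
    "is_tree (V - {y3}) (E - {{x3,y3}})" "card (E - {{x3,y3}}) = card E - 1"
    using tree_leaf_edge[OF T ne] by blast
  define V1 where "V1 = V - {y3}"
  define E1 where "E1 = E - {{x3,y3}}"
  define c where "c = {x3,y3}"
  have T1: "is_tree V1 E1" using s3(5) unfolding V1_def E1_def .
  have cE1: "card E1 = 3 * q + 2" using s3(6) Suc.prems(2) unfolding E1_def by simp
  have ne1: "E1 \<noteq> {}" proof assume "E1 = {}" then show False using cE1 by simp qed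
  obtain x2 y2 where s2: "x2 \<in> V1 - {y2}" "y2 \<in> V1" "{x2,y2} \<in> E1" "\<forall>e\<in>E1 - {{x2,y2}}. y2 \<notin> e"
    "is_tree (V1 - {y2}) (E1 - {{x2,y2}})" "card (E1 - {{x2,y2}}) = card E1 - 1"
    using tree_leaf_edge[OF T1 ne1] by blast
  define V2 where "V2 = V1 - {y2}"
  define E2 where "E2 = E1 - {{x2,y2}}"
  define b where "b = {x2,y2}"
  have T2: "is_tree V2 E2" using s2(5) unfolding V2_def E2_def .
  have cE2: "card E2 = 3 * q + 1" using s2(6) cE1 unfolding E2_def by simp
  have ne2: "E2 \<noteq> {}" proof assume "E2 = {}" then show False using cE2 by simp qed
  obtain x1 y1 where s1: "x1 \<in> V2 - {y1}" "y1 \<in> V2" "{x1,y1} \<in> E2" "\<forall>e\<in>E2 - {{x1,y1}}. y1 \<notin> e"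
    "is_tree (V2 - {y1}) (E2 - {{x1,y1}})" "card (E2 - {{x1,y1}}) = card E2 - 1"
    using tree_leaf_edge[OF T2 ne2] by blast
  define V3 where "V3 = V2 - {y1}"
  define E3 where "E3 = E2 - {{x1,y1}}"
  define a where "a = {x1,y1}"
  have T3: "is_tree V3 E3" using s1(5) unfolding V3_def E3_def .
  have cE3: "card E3 = 3 * q" using s1(6) cE2 unfolding E3_def by simp
  obtain \<P>3 where P3: "good V3 E3 \<P>3" "card \<P>3 \<le> 2 * q" using Suc.IH[OF T3 cE3] by blast
  have Vs: "V3 \<subseteq> V2" "V2 \<subseteq> V1" "V1 \<subseteq> V" unfolding V3_def V2_def V1_def by auto
  have Es: "E3 \<subseteq> E2" "E2 \<subseteq> E1" "E1 \<subseteq> E" unfolding E3_def E2_def E1_def by auto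
  have inE: "a \<in> E2" "b \<in> E1" "c \<in> E" using s1(3) s2(3) s3(3) unfolding a_def b_def c_def .
  have "E = insert c E1" unfolding E1_def c_def using s3(3) by (simp add: insert_Diff insert_absorb)
  moreover have "E1 = insert b E2" unfolding E2_def b_def using s2(3) by (simp add: insert_Diff insert_absorb)
  moreover have "E2 = insert a E3" unfolding E3_def a_def using s1(3) by (simp add: insert_Diff insert_absorb)
  ultimately have Eeq: "E = insert c (insert b (insert a E3))" by simp
  have y1n: "y1 \<notin> V3" and y2n: "y2 \<notin> V2" and y3n: "y3 \<notin> V1" unfolding V3_def V2_def V1_def by auto
  have x1: "x1 \<in> V3" using s1(1) unfolding V3_def by simp
  have x2: "x2 \<in> V2" using s2(1) unfolding V2_def by simp
  have x3: "x3 \<in> V1" using s3(1) unfolding V1_def by simp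
  have y1: "y1 \<in> V2" using s1(2) .
  have y2: "y2 \<in> V1" using s2(2) .
  have y3: "y3 \<in> V" using s3(2) .
  have E3V: "\<forall>e\<in>E3. e \<subseteq> V3" using simple_edge_sub[OF tree_simple[OF T3]] by blast
  have aE3: "a \<notin> E3" using E3V y1n unfolding a_def by blast
  have bE3: "b \<notin> E3" using E3V y2n Vs unfolding b_def by blast
  have cE3': "c \<notin> E3" using E3V y3n Vs unfolding c_def by blast
  have aV2: "a \<subseteq> V2" using x1 y1 Vs unfolding a_def by auto
  have bV1: "b \<subseteq> V1" using x2 y2 Vs unfolding b_def by auto
  have y2b: "y2 \<in> b" and y3c: "y3 \<in> c" unfolding b_def c_def by auto
  have ab: "a \<noteq> b" using aV2 y2n y2b by blast
  have ac: "a \<noteq> c" using aV2 Vs y3n y3c by blast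
  have bc: "b \<noteq> c" using bV1 y3n y3c by blast
  have c3: "connected_graph V3 E3" using tree_conn[OF T3] .
  have y2n3: "y2 \<notin> V3" and y3n3: "y3 \<notin> V3" and y12: "y1 \<noteq> y2" and y13: "y1 \<noteq> y3"
    using y2n y3n Vs y1 y2 by auto
  have aE: "a \<in> E" and bE: "b \<in> E" and cE: "c \<in> E" using inE Es by auto
  have x1V: "x1 \<in> V" and y1V: "y1 \<in> V" and x2V: "x2 \<in> V" and y2V: "y2 \<in> V" and x3V: "x3 \<in> V"
    using x1 y1 x2 y2 x3 Vs by auto
  have V3V: "V3 \<subseteq> V" and E3E: "E3 \<subseteq> E" using Vs Es by auto
  obtain A where A: "is_path_edge_set V E A" "a \<in> A" "b \<in> A" "A \<subseteq> insert a (insert b E3)"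
  proof (cases "x2 = y1")
    case True
    have d: "x1 \<noteq> y1" "y1 \<noteq> y2" "x1 \<noteq> y2" using x1 y1n y2n y1 Vs by auto
    have ee: "{x1,y1} \<in> E" "{y1,y2} \<in> E" using aE bE True unfolding a_def b_def by auto
    have pv: "is_vpath V E [x1,y1,y2]" using vpath3(1)[OF x1V y1V y2V d(1,2,3) ee] .
    have pe: "path_edges [x1,y1,y2] = {a,b}" using True unfolding a_def b_def by simp
    have "is_path_edge_set V E {a,b}" unfolding is_path_edge_set_def using pv pe by metis
    then show ?thesis using that[of "{a,b}"] by blast
  next
    case False
    then have x2': "x2 \<in> V3" using x2 unfolding V3_def by simp
    have e1: "{y1,x1} \<in> E" "{x2,y2} \<in> E" using aE bE unfolding a_def b_def by (auto simp: insert_commute)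
    obtain vs where vs: "is_vpath V E vs" "path_edges vs \<subseteq> insert {y1,x1} (insert {x2,y2} E3)"
      "{y1,x1} \<in> path_edges vs" "{x2,y2} \<in> path_edges vs"
      using bridge[OF c3 V3V E3E x1 x2' y1V y1n y2V y2n3 y12 e1] by blast
    have a': "{y1,x1} = a" unfolding a_def by (simp add: insert_commute)
    have b': "{x2,y2} = b" unfolding b_def by simp
    have "is_path_edge_set V E (path_edges vs)" unfolding is_path_edge_set_def using vs(1) by blast
    then show ?thesis using that[of "path_edges vs"] vs(2,3,4) unfolding a' b' by blast
  qed
  obtain B where B: "is_path_edge_set V E B" "c \<in> B" "(a \<in> B) \<noteq> (b \<in> B)"
  proof (cases "x3 = y2")
    case True
    have d: "x2 \<noteq> y2" "y2 \<noteq> y3" "x2 \<noteq> y3" using x2 y2n y3n y2 Vs by auto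
    have ee: "{x2,y2} \<in> E" "{y2,y3} \<in> E" using bE cE True unfolding b_def c_def by auto
    have pv: "is_vpath V E [x2,y2,y3]" using vpath3(1)[OF x2V y2V y3 d(1,2,3) ee] .
    have pe: "path_edges [x2,y2,y3] = {b,c}" using True unfolding b_def c_def by simp
    have "is_path_edge_set V E {b,c}" unfolding is_path_edge_set_def using pv pe by metis
    moreover have "a \<notin> {b,c}" using ab ac by simp
    ultimately show ?thesis using that[of "{b,c}"] by blast
  next
    case False
    then have x3': "x3 \<in> V2" using x3 unfolding V2_def by simp
    show ?thesis
    proof (cases "x3 = y1")
      case True
      have d: "x1 \<noteq> y1" "y1 \<noteq> y3" "x1 \<noteq> y3" using x1 y1n y3n y1 Vs by auto
      have ee: "{x1,y1} \<in> E" "{y1,y3} \<in> E" using aE cE True unfolding a_def c_def by auto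
      have pv: "is_vpath V E [x1,y1,y3]" using vpath3(1)[OF x1V y1V y3 d(1,2,3) ee] .
      have pe: "path_edges [x1,y1,y3] = {a,c}" using True unfolding a_def c_def by simp
      have "is_path_edge_set V E {a,c}" unfolding is_path_edge_set_def using pv pe by metis
      moreover have "b \<notin> {a,c}" using ab bc by simp
      ultimately show ?thesis using that[of "{a,c}"] by blast
    next
      case False
      then have x3'': "x3 \<in> V3" using x3' unfolding V3_def by simp
      have e1: "{y1,x1} \<in> E" "{x3,y3} \<in> E" using aE cE unfolding a_def c_def by (auto simp: insert_commute)
      obtain vs where vs: "is_vpath V E vs" "path_edges vs \<subseteq> insert {y1,x1} (insert {x3,y3} E3)"
        "{y1,x1} \<in> path_edges vs" "{x3,y3} \<in> path_edges vs"
        using bridge[OF c3 V3V E3E x1 x3'' y1V y1n y3 y3n3 y13 e1] by blast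
      have a': "{y1,x1} = a" unfolding a_def by (simp add: insert_commute)
      have c': "{x3,y3} = c" unfolding c_def by simp
      have "is_path_edge_set V E (path_edges vs)" unfolding is_path_edge_set_def using vs(1) by blast
      moreover have "b \<notin> path_edges vs" using vs(2) bE3 ab bc unfolding a' c' by blast
      ultimately show ?thesis using that[of "path_edges vs"] vs(3,4) unfolding a' c' by blast
    qed
  qed
  have cA: "c \<notin> A" using A(4) cE3' ac bc by auto
  define \<P> where "\<P> = insert A (insert B \<P>3)"
  have P3f: "finite \<P>3" and P3p: "\<forall>P\<in>\<P>3. is_path_edge_set V3 E3 P"
    and P3c: "\<forall>e\<in>E3. \<exists>P\<in>\<P>3. e \<in> P"
    and P3s: "\<forall>e\<in>E3. \<forall>e'\<in>E3. e \<noteq> e' \<longrightarrow> (\<exists>P\<in>\<P>3. (e \<in> P) \<noteq> (e' \<in> P))"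
    using P3(1) unfolding good_def by auto
  have P3sub: "\<forall>P\<in>\<P>3. P \<subseteq> E3" using P3p path_edge_set_sub by blast
  have new: "\<forall>P\<in>\<P>3. a \<notin> P \<and> b \<notin> P \<and> c \<notin> P" using P3sub aE3 bE3 cE3' by blast
  have good: "good V E \<P>"
    unfolding good_def
  proof (intro conjI)
    show "finite \<P>" unfolding \<P>_def using P3f by simp
    show "\<forall>P\<in>\<P>. is_path_edge_set V E P"
      unfolding \<P>_def using A(1) B(1) good_lift_paths[OF P3p V3V E3E] by blast
    show "\<forall>e\<in>E. \<exists>P\<in>\<P>. e \<in> P"
    proof
      fix e assume "e \<in> E"
      then consider "e = c" | "e = b" | "e = a" | "e \<in> E3" using Eeq by blast
      then show "\<exists>P\<in>\<P>. e \<in> P"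
      proof cases
        case 1 then show ?thesis using B(2) unfolding \<P>_def by blast
      next
        case 2 then show ?thesis using A(3) unfolding \<P>_def by blast
      next
        case 3 then show ?thesis using A(2) unfolding \<P>_def by blast
      next
        case 4 then show ?thesis using P3c unfolding \<P>_def by blast
      qed
    qed
    have sep_new: "\<And>x x'. x \<in> {a,b,c} \<Longrightarrow> x' \<in> {a,b,c} \<Longrightarrow> x \<noteq> x' \<Longrightarrow> \<exists>P\<in>\<P>. (x \<in> P) \<noteq> (x' \<in> P)"
    proof -
      fix x x' assume "x \<in> {a,b,c}" "x' \<in> {a,b,c}" "x \<noteq> x'"
      then have "(x \<in> A) \<noteq> (x' \<in> A) \<or> (x \<in> B) \<noteq> (x' \<in> B)"
        using A(2,3) cA B(3) by auto
      then show "\<exists>P\<in>\<P>. (x \<in> P) \<noteq> (x' \<in> P)" unfolding \<P>_def by blast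
    qed
    have sep_mixed: "\<And>x e. x \<in> {a,b,c} \<Longrightarrow> e \<in> E3 \<Longrightarrow> \<exists>P\<in>\<P>. (x \<in> P) \<noteq> (e \<in> P)"
    proof -
      fix x e assume x: "x \<in> {a,b,c}" and e: "e \<in> E3"
      obtain P where "P \<in> \<P>3" "e \<in> P" using P3c e by blast
      moreover have "x \<notin> P" using new x \<open>P \<in> \<P>3\<close> by blast
      ultimately show "\<exists>P\<in>\<P>. (x \<in> P) \<noteq> (e \<in> P)" unfolding \<P>_def by blast
    qed
    show "\<forall>e\<in>E. \<forall>e'\<in>E. e \<noteq> e' \<longrightarrow> (\<exists>P\<in>\<P>. (e \<in> P) \<noteq> (e' \<in> P))"
    proof (intro ballI impI)
      fix e e' assume e: "e \<in> E" and e': "e' \<in> E" and ne: "e \<noteq> e'"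
      consider "e \<in> {a,b,c}" "e' \<in> {a,b,c}" | "e \<in> {a,b,c}" "e' \<in> E3" | "e \<in> E3" "e' \<in> {a,b,c}"
        | "e \<in> E3" "e' \<in> E3" using e e' Eeq by blast
      then show "\<exists>P\<in>\<P>. (e \<in> P) \<noteq> (e' \<in> P)"
      proof cases
        case 1 then show ?thesis using sep_new ne by blast
      next
        case 2 then show ?thesis using sep_mixed by blast
      next
        case 3 then have "\<exists>P\<in>\<P>. (e' \<in> P) \<noteq> (e \<in> P)" using sep_mixed by blast
        then show ?thesis by metis
      next
        case 4 then show ?thesis using P3s ne unfolding \<P>_def by blast
      qed
    qed
  qed
  have "card (insert B \<P>3) \<le> card \<P>3 + 1" using P3f by (simp add: card_insert_if)
  moreover have "card \<P> \<le> card (insert B \<P>3) + 1" unfolding \<P>_def using P3f by (simp add: card_insert_if)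
  ultimately have "card \<P> \<le> card \<P>3 + 2" by simp
  then have "card \<P> \<le> 2 * Suc q" using P3(2) by simp
  then show ?case using good by blast
qed


lemma good_sep: "good V E \<P> \<Longrightarrow> separating_path_system V E \<P>"
  unfolding good_def separating_path_system_def by blast

lemma sep_add_empty_edge:
  assumes g: "good V' E' \<P>" and V: "V' \<subseteq> V" and E: "E = insert d E'" and d: "d \<notin> E'"
  shows "separating_path_system V E \<P>"
  unfolding separating_path_system_def
proof (intro conjI)
  have p: "\<forall>P\<in>\<P>. is_path_edge_set V' E' P" and c: "\<forall>e\<in>E'. \<exists>P\<in>\<P>. e \<in> P"
    and s: "\<forall>e\<in>E'. \<forall>e'\<in>E'. e \<noteq> e' \<longrightarrow> (\<exists>P\<in>\<P>. (e \<in> P) \<noteq> (e' \<in> P))"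
    using g unfolding good_def by auto
  have E'E: "E' \<subseteq> E" using E by blast
  show "\<forall>P\<in>\<P>. is_path_edge_set V E P" using good_lift_paths[OF p V E'E] .
  have nd: "\<forall>P\<in>\<P>. d \<notin> P" using p path_edge_set_sub d by blast
  show "\<forall>e\<in>E. \<forall>e'\<in>E. e \<noteq> e' \<longrightarrow> (\<exists>P\<in>\<P>. (e \<in> P) \<noteq> (e' \<in> P))"
  proof (intro ballI impI)
    fix e e' assume e: "e \<in> E" and e': "e' \<in> E" and ne: "e \<noteq> e'"
    show "\<exists>P\<in>\<P>. (e \<in> P) \<noteq> (e' \<in> P)"
    proof (cases "e = d")
      case True
      then have "e' \<in> E'" using e' ne E by blast
      then obtain P where "P \<in> \<P>" "e' \<in> P" using c by blast
      then show ?thesis using nd True by blast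
    next
      case False
      then have eE: "e \<in> E'" using e E by blast
      show ?thesis
      proof (cases "e' = d")
        case True
        obtain P where "P \<in> \<P>" "e \<in> P" using c eE by blast
        then show ?thesis using nd True by blast
      next
        case False
        then have "e' \<in> E'" using e' E by blast
        then show ?thesis using s eE ne by blast
      qed
    qed
  qed
qed

lemma good_add_edge:
  assumes g: "good V' E' \<P>" and V: "V' \<subseteq> V" and E: "E = insert d E'" and d: "d \<notin> E'"
    and pd: "is_path_edge_set V E {d}"
  shows "good V E (insert {d} \<P>)"
proof -
  have s: "separating_path_system V E \<P>" using sep_add_empty_edge[OF g V E d] .
  have c: "\<forall>e\<in>E'. \<exists>P\<in>\<P>. e \<in> P" and f: "finite \<P>" using g unfolding good_def by auto
  show ?thesis unfolding good_def
  proof (intro conjI)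
    show "finite (insert {d} \<P>)" using f by simp
    show "\<forall>P\<in>insert {d} \<P>. is_path_edge_set V E P" using s pd unfolding separating_path_system_def by blast
    show "\<forall>e\<in>E. \<exists>P\<in>insert {d} \<P>. e \<in> P" using c E by blast
    show "\<forall>e\<in>E. \<forall>e'\<in>E. e \<noteq> e' \<longrightarrow> (\<exists>P\<in>insert {d} \<P>. (e \<in> P) \<noteq> (e' \<in> P))"
      using s unfolding separating_path_system_def by blast
  qed
qed

lemma upper_system:
  assumes T: "is_tree V E"
  shows "\<exists>\<P>. finite \<P> \<and> separating_path_system V E \<P> \<and> 3 * card \<P> \<le> 2 * card E"
proof -
  define q where "q = card E div 3"
  define r where "r = card E mod 3"
  have cE: "card E = 3 * q + r" unfolding q_def r_def by simp
  have "r < 3" unfolding r_def by simp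
  then consider "r = 0" | "r = 1" | "r = 2" by linarith
  then show ?thesis
  proof cases
    case 1
    obtain \<P> where "good V E \<P>" "card \<P> \<le> 2 * q" using good_three[OF T] cE 1 by auto
    moreover then have "finite \<P>" unfolding good_def by simp
    ultimately show ?thesis using good_sep cE 1 by fastforce
  next
    case 2
    have ne: "E \<noteq> {}" using cE 2 by auto
    obtain x y where s: "x \<in> V - {y}" "y \<in> V" "{x,y} \<in> E" "\<forall>e\<in>E - {{x,y}}. y \<notin> e"
      "is_tree (V - {y}) (E - {{x,y}})" "card (E - {{x,y}}) = card E - 1"
      using tree_leaf_edge[OF T ne] by blast
    have c1: "card (E - {{x,y}}) = 3 * q" using s(6) cE 2 by simp
    obtain \<P> where P: "good (V - {y}) (E - {{x,y}}) \<P>" "card \<P> \<le> 2 * q" using good_three[OF s(5) c1] by blast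
    have "E = insert {x,y} (E - {{x,y}})" using s(3) by auto
    then have "separating_path_system V E \<P>" using sep_add_empty_edge[OF P(1), of V E "{x,y}"] by auto
    moreover have "finite \<P>" using P(1) unfolding good_def by simp
    ultimately show ?thesis using P(2) cE 2 by (intro exI[of _ \<P>]) simp
  next
    case 3
    have ne: "E \<noteq> {}" using cE 3 by auto
    obtain x y where s: "x \<in> V - {y}" "y \<in> V" "{x,y} \<in> E" "\<forall>e\<in>E - {{x,y}}. y \<notin> e"
      "is_tree (V - {y}) (E - {{x,y}})" "card (E - {{x,y}}) = card E - 1"
      using tree_leaf_edge[OF T ne] by blast
    define V1 where "V1 = V - {y}"
    define E1 where "E1 = E - {{x,y}}"
    have T1: "is_tree V1 E1" using s(5) unfolding V1_def E1_def .
    have cE1: "card E1 = 3 * q + 1" using s(6) cE 3 unfolding E1_def by simp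
    have ne1: "E1 \<noteq> {}" proof assume "E1 = {}" then show False using cE1 by simp qed
    obtain x' y' where s': "x' \<in> V1 - {y'}" "y' \<in> V1" "{x',y'} \<in> E1" "\<forall>e\<in>E1 - {{x',y'}}. y' \<notin> e"
      "is_tree (V1 - {y'}) (E1 - {{x',y'}})" "card (E1 - {{x',y'}}) = card E1 - 1"
      using tree_leaf_edge[OF T1 ne1] by blast
    have c2: "card (E1 - {{x',y'}}) = 3 * q" using s'(6) cE1 by simp
    obtain \<P> where P: "good (V1 - {y'}) (E1 - {{x',y'}}) \<P>" "card \<P> \<le> 2 * q"
      using good_three[OF s'(5) c2] by blast
    have pd: "is_path_edge_set V1 E1 {{x',y'}}"
      using vpath2[of x' V1 y' E1] s'(1,2,3) unfolding is_path_edge_set_def by (metis DiffD1 DiffD2 singletonI)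
    have g1: "good V1 E1 (insert {{x',y'}} \<P>)"
      using good_add_edge[OF P(1), of V1 E1 "{x',y'}"] pd s'(3) by auto
    have "E = insert {x,y} E1" using s(3) unfolding E1_def by auto
    moreover have "V1 \<subseteq> V" unfolding V1_def by auto
    ultimately have "separating_path_system V E (insert {{x',y'}} \<P>)"
      using sep_add_empty_edge[OF g1, of V E "{x,y}"] unfolding E1_def by auto
    moreover have "finite (insert {{x',y'}} \<P>)" using g1 unfolding good_def by simp
    moreover have "card (insert {{x',y'}} \<P>) \<le> 2 * q + 1"
      using P(2) card_insert_le[of \<P> "{{x',y'}}"] \<open>finite (insert {{x',y'}} \<P>)\<close>
      by (simp add: card_insert_if)
    ultimately show ?thesis using cE 3 by (intro exI[of _ "insert {{x',y'}} \<P>"]) simp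
  qed
qed

lemma f_sep_le: "finite \<P> \<Longrightarrow> separating_path_system V E \<P> \<Longrightarrow> f_sep V E \<le> card \<P>"
  unfolding f_sep_def by (rule Least_le) blast

lemma f_sep_witness:
  assumes "finite \<P>0" "separating_path_system V E \<P>0"
  shows "\<exists>\<P>. finite \<P> \<and> card \<P> = f_sep V E \<and> separating_path_system V E \<P>"
  unfolding f_sep_def by (rule LeastI_ex) (use assms in blast)

lemma f_sep_upper: "is_tree V E \<Longrightarrow> 3 * f_sep V E \<le> 2 * card E"
proof -
  assume T: "is_tree V E"
  obtain \<P> where "finite \<P>" "separating_path_system V E \<P>" "3 * card \<P> \<le> 2 * card E"
    using upper_system[OF T] by blast
  then show ?thesis using f_sep_le[of \<P> V E] by linarith
qed


definition deg :: "'a set set \<Rightarrow> 'a \<Rightarrow> nat" where "deg E v = card {e\<in>E. v \<in> e}"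
definition code :: "'a set set set \<Rightarrow> 'a set \<Rightarrow> 'a set set set" where "code \<P> e = {P\<in>\<P>. e \<in> P}"
definition tc :: "'a set set set \<Rightarrow> 'a \<Rightarrow> nat" where "tc \<P> v = card {P\<in>\<P>. card {e\<in>P. v \<in> e} = 1}"

lemma path_endpoints:
  assumes "is_path_edge_set V E P"
  shows "card {v\<in>V. card {e\<in>P. v \<in> e} = 1} \<le> 2"
proof -
  obtain vs where vs: "is_vpath V E vs" "P = path_edges vs" using assms unfolding is_path_edge_set_def by blast
  have ne: "vs \<noteq> []" using vpath_ne[OF vs(1)] .
  have d: "distinct vs" using vpath_distinct[OF vs(1)] .
  have "{v\<in>V. card {e\<in>P. v \<in> e} = 1} \<subseteq> {hd vs, last vs}"
  proof
    fix v assume v: "v \<in> {v\<in>V. card {e\<in>P. v \<in> e} = 1}"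
    then have c1: "card {e\<in>P. v \<in> e} = 1" by simp
    then obtain e where "{e\<in>P. v \<in> e} = {e}" by (rule card_1_singletonE)
    then have "e \<in> P" "v \<in> e" by auto
    then have "v \<in> set vs" using path_edges_subset vs(2) by blast
    then obtain i where i: "i < length vs" "vs ! i = v" by (metis in_set_conv_nth)
    show "v \<in> {hd vs, last vs}"
    proof (rule ccontr)
      assume nv: "v \<notin> {hd vs, last vs}"
      have "i \<noteq> 0"
      proof
        assume "i = 0" then have "hd vs = v" using i ne by (simp add: hd_conv_nth)
        then show False using nv by simp
      qed
      moreover have "i \<noteq> length vs - 1"
      proof
        assume "i = length vs - 1" then have "last vs = v" using i ne by (simp add: last_conv_nth)
        then show False using nv by simp
      qed
      ultimately have ii: "0 < i" "Suc i < length vs" using i by auto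
      have si: "Suc (i - 1) = i" using ii by simp
      have e1: "{vs ! (i - 1), v} \<in> P"
        unfolding vs(2) path_edges_def using ii si i(2) by (intro CollectI exI[of _ "i - 1"]) auto
      have e2: "{v, vs ! Suc i} \<in> P"
        unfolding vs(2) path_edges_def using ii i(2) by (intro CollectI exI[of _ i]) auto
      have "vs ! (i - 1) \<noteq> vs ! Suc i" using ii nth_eq_iff_index_eq[OF d, of "i - 1" "Suc i"] by auto
      moreover have "vs ! (i - 1) \<noteq> v" using ii i nth_eq_iff_index_eq[OF d, of "i - 1" i] by auto
      ultimately have "{vs ! (i - 1), v} \<noteq> {v, vs ! Suc i}" by (auto simp: doubleton_eq_iff)
      then have c2: "card {{vs ! (i - 1), v}, {v, vs ! Suc i}} = 2" by simp
      have sb: "{{vs ! (i - 1), v}, {v, vs ! Suc i}} \<subseteq> {e\<in>P. v \<in> e}" using e1 e2 by auto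
      have fn: "finite {e\<in>P. v \<in> e}" using vs(2) by simp
      have "2 \<le> card {e\<in>P. v \<in> e}" using card_mono[OF fn sb] c2 by simp
      then show False using c1 by simp
    qed
  qed
  then have "card {v\<in>V. card {e\<in>P. v \<in> e} = 1} \<le> card {hd vs, last vs}" by (rule card_mono[rotated]) simp
  also have "\<dots> \<le> 2" by (simp add: card_insert_le_m1)
  finally show ?thesis .
qed

lemma sum_tc:
  assumes fV: "finite V" and fP: "finite \<P>" and p: "\<forall>P\<in>\<P>. is_path_edge_set V E P"
  shows "(\<Sum>v\<in>V. tc \<P> v) \<le> 2 * card \<P>"
proof -
  have "(\<Sum>v\<in>V. tc \<P> v) = (\<Sum>v\<in>V. \<Sum>P\<in>\<P>. if card {e\<in>P. v \<in> e} = 1 then 1 else 0)"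
    unfolding tc_def using fP by (simp add: card_filter_sum)
  also have "\<dots> = (\<Sum>P\<in>\<P>. \<Sum>v\<in>V. if card {e\<in>P. v \<in> e} = 1 then 1 else 0)" by (rule sum.swap)
  also have "\<dots> = (\<Sum>P\<in>\<P>. card {v\<in>V. card {e\<in>P. v \<in> e} = 1})"
    using fV by (simp add: card_filter_sum)
  also have "\<dots> \<le> (\<Sum>P\<in>\<P>. 2)" by (rule sum_mono) (use path_endpoints p in blast)
  finally show ?thesis by simp
qed

lemma sum_deg:
  assumes s: "simple_graph V E"
  shows "(\<Sum>v\<in>V. deg E v) = 2 * card E"
proof -
  have fV: "finite V" and fE: "finite E" using simple_finite_V[OF s] simple_finite_E[OF s] .
  have "(\<Sum>v\<in>V. deg E v) = (\<Sum>v\<in>V. \<Sum>e\<in>E. if v \<in> e then 1 else 0)"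
    unfolding deg_def using fE by (simp add: card_filter_sum)
  also have "\<dots> = (\<Sum>e\<in>E. \<Sum>v\<in>V. if v \<in> e then 1 else 0)" by (rule sum.swap)
  also have "\<dots> = (\<Sum>e\<in>E. card {v\<in>V. v \<in> e})" using fV by (simp add: card_filter_sum)
  also have "\<dots> = (\<Sum>e\<in>E. 2)"
  proof (rule sum.cong)
    fix e assume "e \<in> E"
    then obtain u v where "e = {u,v}" "u \<noteq> v" "u \<in> V" "v \<in> V" using simple_edge[OF s] by blast
    then have "{v\<in>V. v \<in> e} = {u,v}" by auto
    then show "card {v\<in>V. v \<in> e} = 2" using \<open>u \<noteq> v\<close> by simp
  qed simp
  finally show ?thesis by simp
qed

lemma closed_card:
  assumes c: "connected_graph V E" and fV: "finite V" and S: "S \<subseteq> V" "s \<in> S"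
    and cl: "\<forall>x\<in>S. \<forall>e\<in>E. x \<in> e \<longrightarrow> e \<subseteq> S"
  shows "card V \<le> card S"
proof -
  have "\<forall>e\<in>E. \<forall>x\<in>e. x \<in> S \<longrightarrow> e \<subseteq> S" using cl by blast
  then have "S = V" using connected_closed[OF c S] by blast
  then show ?thesis by simp
qed

lemma code_inj:
  assumes "separating_path_system V E \<P>" "e \<in> E" "e' \<in> E" "code \<P> e = code \<P> e'"
  shows "e = e'"
proof (rule ccontr)
  assume "e \<noteq> e'"
  then obtain P where "P \<in> \<P>" "(e \<in> P) \<noteq> (e' \<in> P)" using assms(1-3) unfolding separating_path_system_def by blast
  then have "code \<P> e \<noteq> code \<P> e'" unfolding code_def by blast
  then show False using assms(4) by simp
qed

lemma tc_one_edge: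
  assumes sub: "\<forall>P\<in>\<P>. P \<subseteq> E" and N: "{e\<in>E. v \<in> e} \<subseteq> insert f Z" and f: "f \<in> E" "v \<in> f"
    and Z: "\<forall>P\<in>\<P>. P \<inter> Z = {}"
  shows "tc \<P> v = card (code \<P> f)"
proof -
  have "\<And>P. P \<in> \<P> \<Longrightarrow> {e\<in>P. v \<in> e} = (if f \<in> P then {f} else {})"
  proof -
    fix P assume P: "P \<in> \<P>"
    have "{e\<in>P. v \<in> e} \<subseteq> insert f Z" using sub P N by blast
    then have "{e\<in>P. v \<in> e} \<subseteq> {f}" using Z P by blast
    then show "{e\<in>P. v \<in> e} = (if f \<in> P then {f} else {})" using f by auto
  qed
  then have "{P\<in>\<P>. card {e\<in>P. v \<in> e} = 1} = code \<P> f" unfolding code_def by (auto split: if_splits)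
  then show ?thesis unfolding tc_def by simp
qed

lemma tc_two_edges:
  assumes fP: "finite \<P>" and s: "separating_path_system V E \<P>"
    and N: "{e\<in>E. v \<in> e} \<subseteq> {f, g} \<union> Z" and fg: "f \<in> E" "g \<in> E" "v \<in> f" "v \<in> g" "f \<noteq> g"
    and Z: "\<forall>P\<in>\<P>. P \<inter> Z = {}"
  shows "tc \<P> v \<ge> 1"
proof -
  have sub: "\<forall>P\<in>\<P>. P \<subseteq> E" using s path_edge_set_sub unfolding separating_path_system_def by blast
  obtain P where P: "P \<in> \<P>" "(f \<in> P) \<noteq> (g \<in> P)" using s fg unfolding separating_path_system_def by blast
  have PE: "P \<subseteq> E" using sub P(1) by blast
  have PZ: "P \<inter> Z = {}" using Z P(1) by blast
  have "{e\<in>P. v \<in> e} \<subseteq> {f,g}"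
  proof
    fix e assume e: "e \<in> {e\<in>P. v \<in> e}"
    then have "e \<in> {e\<in>E. v \<in> e}" using PE by blast
    then have "e \<in> {f,g} \<union> Z" using N by blast
    moreover have "e \<notin> Z" using e PZ by blast
    ultimately show "e \<in> {f,g}" by blast
  qed
  then have eq: "{e\<in>P. v \<in> e} = {f,g} \<inter> P" using fg(3,4) by blast
  have "card ({f,g} \<inter> P) = 1"
  proof (cases "f \<in> P")
    case True then have "{f,g} \<inter> P = {f}" using P(2) by auto
    then show ?thesis by simp
  next
    case False then have "{f,g} \<inter> P = {g}" using P(2) by auto
    then show ?thesis by simp
  qed
  then have "P \<in> {P\<in>\<P>. card {e\<in>P. v \<in> e} = 1}" using P(1) eq by simp
  then have "{P\<in>\<P>. card {e\<in>P. v \<in> e} = 1} \<noteq> {}" by blast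
  moreover have "finite {P\<in>\<P>. card {e\<in>P. v \<in> e} = 1}" using fP by simp
  ultimately show ?thesis unfolding tc_def by (simp add: Suc_le_eq card_gt_0_iff)
qed


lemma sum_indicator_int: "finite V \<Longrightarrow> S \<subseteq> V \<Longrightarrow> (\<Sum>v\<in>V. if v \<in> S then (1::int) else 0) = int (card S)"
proof -
  assume f: "finite V" and s: "S \<subseteq> V"
  have "(\<Sum>v\<in>V. if v \<in> S then (1::int) else 0) = (\<Sum>v\<in>S. 1)"
    using sum.inter_filter[OF f, of "\<lambda>_. (1::int)" "\<lambda>v. v \<in> S"] s
    by (simp add: Int_absorb1 Collect_mem_eq Int_def[symmetric] inf.absorb_iff2 inf_commute)
  then show ?thesis by simp
qed

lemma card_singleton_codes:
  assumes fP: "finite \<P>" and s: "separating_path_system V E \<P>"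
    and ed: "\<forall>v\<in>S. ed v \<in> E \<and> card (code \<P> (ed v)) = 1" and inj: "inj_on ed S"
  shows "card S \<le> card \<P>"
proof -
  have inj2: "inj_on (\<lambda>v. code \<P> (ed v)) S"
  proof (rule inj_onI)
    fix v w assume "v \<in> S" "w \<in> S" "code \<P> (ed v) = code \<P> (ed w)"
    then have "ed v = ed w" using code_inj[OF s] ed by blast
    then show "v = w" using inj \<open>v \<in> S\<close> \<open>w \<in> S\<close> by (simp add: inj_on_eq_iff)
  qed
  have "(\<lambda>v. code \<P> (ed v)) ` S \<subseteq> (\<lambda>P. {P}) ` \<P>"
  proof
    fix A assume "A \<in> (\<lambda>v. code \<P> (ed v)) ` S"
    then obtain v where v: "v \<in> S" "A = code \<P> (ed v)" by blast
    then have "card A = 1" using ed by simp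
    then obtain P where "A = {P}" by (rule card_1_singletonE)
    moreover have "A \<subseteq> \<P>" using v(2) unfolding code_def by blast
    ultimately show "A \<in> (\<lambda>P. {P}) ` \<P>" by blast
  qed
  then have "card ((\<lambda>v. code \<P> (ed v)) ` S) \<le> card ((\<lambda>P. {P}) ` \<P>)"
    by (rule card_mono[rotated]) (use fP in simp)
  also have "\<dots> \<le> card \<P>" by (rule card_image_le[OF fP])
  finally show ?thesis using card_image[OF inj2] by simp
qed

lemma lower_bound:
  assumes T: "is_tree V E" and n4: "card V \<ge> 4" and fP: "finite \<P>" and s: "separating_path_system V E \<P>"
  shows "card V + 1 \<le> 3 * card \<P>"
proof -
  have sg: "simple_graph V E" using tree_simple[OF T] .
  have cg: "connected_graph V E" using tree_conn[OF T] .
  have fV: "finite V" and fE: "finite E" using tree_finite_V[OF T] tree_finite_E[OF T] .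
  have paths: "\<forall>P\<in>\<P>. is_path_edge_set V E P" using s unfolding separating_path_system_def by blast
  have sub: "\<forall>P\<in>\<P>. P \<subseteq> E" using paths path_edge_set_sub by blast
  have cE: "card E = card V - 1" using tree_card_E[OF T] .
  have fN: "\<And>v. finite {e\<in>E. v \<in> e}" using fE by simp
  have small: "\<And>S'. S' \<subseteq> V \<Longrightarrow> S' \<noteq> {} \<Longrightarrow> (\<forall>x\<in>S'. \<forall>e\<in>E. x \<in> e \<longrightarrow> e \<subseteq> S') \<Longrightarrow> card S' \<le> 3 \<Longrightarrow> False"
  proof -
    fix S' assume a: "S' \<subseteq> V" "S' \<noteq> {}" "\<forall>x\<in>S'. \<forall>e\<in>E. x \<in> e \<longrightarrow> e \<subseteq> S'" "card S' \<le> 3"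
    obtain s0 where "s0 \<in> S'" using a(2) by blast
    then have "card V \<le> card S'" by (rule closed_card[OF cg fV a(1) _ a(3)])
    then show False using a(4) n4 by simp
  qed
  have degpos: "\<forall>v\<in>V. deg E v \<ge> 1"
  proof
    fix v assume v: "v \<in> V"
    show "deg E v \<ge> 1"
    proof (rule ccontr)
      assume "\<not> deg E v \<ge> 1"
      then have "card {e\<in>E. v \<in> e} = 0" unfolding deg_def by simp
      then have "{e\<in>E. v \<in> e} = {}" using fN[of v] card_0_eq by blast
      then have "\<forall>x\<in>{v}. \<forall>e\<in>E. x \<in> e \<longrightarrow> e \<subseteq> {v}" by blast
      then show False using small[of "{v}"] v by simp
    qed
  qed
  define le where "le v = (SOME e. e \<in> E \<and> v \<in> e)" for v
  have leafN: "\<And>v. deg E v = 1 \<Longrightarrow> {e\<in>E. v \<in> e} = {le v}"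
  proof -
    fix v assume "deg E v = 1"
    then obtain e where e: "{e\<in>E. v \<in> e} = {e}" unfolding deg_def by (rule card_1_singletonE)
    then have "e \<in> E \<and> v \<in> e" by blast
    then have "le v \<in> E \<and> v \<in> le v" unfolding le_def by (rule someI)
    then have "le v = e" using e by blast
    then show "{e\<in>E. v \<in> e} = {le v}" using e by simp
  qed
  have leE: "\<And>v. deg E v = 1 \<Longrightarrow> le v \<in> E \<and> v \<in> le v" using leafN by blast
  have tc_leaf: "\<And>v. deg E v = 1 \<Longrightarrow> tc \<P> v = card (code \<P> (le v))"
  proof -
    fix v assume d: "deg E v = 1"
    show "tc \<P> v = card (code \<P> (le v))"
      by (rule tc_one_edge[OF sub, of v "le v" "{}"]) (use leafN[OF d] leE[OF d] in auto)
  qed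
  have edge2: "\<And>e a. e \<in> E \<Longrightarrow> a \<in> e \<Longrightarrow> \<exists>b. e = {a,b} \<and> b \<noteq> a \<and> b \<in> V \<and> a \<in> V"
    using simple_edge_other[OF sg] by blast
  have leaf_pair: "\<And>v w. v \<in> V \<Longrightarrow> w \<in> V \<Longrightarrow> deg E v = 1 \<Longrightarrow> deg E w = 1 \<Longrightarrow> le v = le w \<Longrightarrow> v = w"
  proof (rule ccontr)
    fix v w assume a: "v \<in> V" "w \<in> V" "deg E v = 1" "deg E w = 1" "le v = le w" "v \<noteq> w"
    obtain b where b: "le v = {v,b}" "b \<noteq> v" using edge2 leE[OF a(3)] by blast
    have "w \<in> le v" using leE[OF a(4)] a(5) by simp
    then have ev: "le v = {v,w}" using b a(6) by auto
    have "\<forall>x\<in>{v,w}. \<forall>e\<in>E. x \<in> e \<longrightarrow> e \<subseteq> {v,w}"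
    proof (intro ballI impI)
      fix x e assume x: "x \<in> {v,w}" and e: "e \<in> E" "x \<in> e"
      have "e = le v"
      proof (cases "x = v")
        case True then show ?thesis using leafN[OF a(3)] e by blast
      next
        case False then have "x = w" using x by simp
        then show ?thesis using leafN[OF a(4)] e a(5) by blast
      qed
      then show "e \<subseteq> {v,w}" using ev by simp
    qed
    then show False using small[of "{v,w}"] a(1,2) by (simp add: card_insert_le_m1)
  qed
  have tc_deg2: "\<And>v. deg E v = 2 \<Longrightarrow> tc \<P> v \<ge> 1"
  proof -
    fix v assume "deg E v = 2"
    then obtain f g where fg: "{e\<in>E. v \<in> e} = {f,g}" "f \<noteq> g" unfolding deg_def by (meson card_2_iff)
    show "tc \<P> v \<ge> 1" by (rule tc_two_edges[OF fP s, of v f g "{}"]) (use fg in auto)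
  qed
  have sumdeg: "(\<Sum>v\<in>V. deg E v) = 2 * (card V - 1)" using sum_deg[OF sg] cE by simp
  have sumtc: "(\<Sum>v\<in>V. tc \<P> v) \<le> 2 * card \<P>" using sum_tc[OF fV fP paths] .
  have LHS: "(\<Sum>v\<in>V. 3 - int (deg E v)) = int (card V) + 2"
  proof -
    have "(\<Sum>v\<in>V. 3 - int (deg E v)) = 3 * int (card V) - int (\<Sum>v\<in>V. deg E v)"
      by (simp add: sum_subtractf of_nat_sum)
    also have "\<dots> = int (card V) + 2" using sumdeg n4 by simp
    finally show ?thesis .
  qed
  define S1 where "S1 = {v\<in>V. deg E v = 1 \<and> tc \<P> v = 1}"
  have S1V: "S1 \<subseteq> V" unfolding S1_def by blast
  have S1card: "card S1 \<le> card \<P>"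
  proof (rule card_singleton_codes[OF fP s, of S1 le])
    show "\<forall>v\<in>S1. le v \<in> E \<and> card (code \<P> (le v)) = 1" using leE tc_leaf unfolding S1_def by auto
    show "inj_on le S1"
    proof (rule inj_onI)
      fix v w assume "v \<in> S1" "w \<in> S1" "le v = le w"
      then show "v = w" using leaf_pair[of v w] unfolding S1_def by simp
    qed
  qed
  show ?thesis
  proof (cases "\<exists>v0\<in>V. deg E v0 = 1 \<and> tc \<P> v0 = 0")
    case False
    have ineq: "\<forall>v\<in>V. 3 - int (deg E v) \<le> int (tc \<P> v) + (if v \<in> S1 then 1 else 0)"
    proof
      fix v assume v: "v \<in> V"
      consider "deg E v = 1" | "deg E v = 2" | "deg E v \<ge> 3" using degpos v by force
      then show "3 - int (deg E v) \<le> int (tc \<P> v) + (if v \<in> S1 then 1 else 0)"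
      proof cases
        case 1
        then have "tc \<P> v \<noteq> 0" using False v by auto
        then show ?thesis using 1 v unfolding S1_def by auto
      next
        case 2 then show ?thesis using tc_deg2[OF 2] by simp
      qed simp
    qed
    have "(\<Sum>v\<in>V. 3 - int (deg E v)) \<le> (\<Sum>v\<in>V. int (tc \<P> v) + (if v \<in> S1 then 1 else 0))"
      by (rule sum_mono) (use ineq in blast)
    then have "int (card V) + 2 \<le> (\<Sum>v\<in>V. int (tc \<P> v) + (if v \<in> S1 then 1 else 0))"
      using LHS by simp
    also have "\<dots> = int (\<Sum>v\<in>V. tc \<P> v) + int (card S1)"
      by (simp add: sum.distrib of_nat_sum sum_indicator_int[OF fV S1V])
    finally show ?thesis using sumtc S1card by linarith
  next
    case True
    then obtain v0 where v0: "v0 \<in> V" "deg E v0 = 1" "tc \<P> v0 = 0" by blast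
    define e0 where "e0 = le v0"
    have e0E: "e0 \<in> E" "v0 \<in> e0" using leE[OF v0(2)] unfolding e0_def by auto
    have ce0: "code \<P> e0 = {}" using tc_leaf[OF v0(2)] v0(3) fP unfolding e0_def code_def by simp
    have unused: "\<forall>P\<in>\<P>. P \<inter> {e0} = {}" using ce0 unfolding code_def by blast
    obtain u where u: "e0 = {v0,u}" "u \<noteq> v0" "u \<in> V" using edge2[OF e0E] by blast
    have ue0: "u \<in> e0" using u by simp
    have Z1: "\<And>w. w \<in> V \<Longrightarrow> deg E w = 1 \<Longrightarrow> tc \<P> w = 0 \<Longrightarrow> w = v0"
    proof -
      fix w assume w: "w \<in> V" "deg E w = 1" "tc \<P> w = 0"
      have "code \<P> (le w) = {}" using tc_leaf[OF w(2)] w(3) fP unfolding code_def by simp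
      then have "code \<P> (le w) = code \<P> e0" using ce0 by simp
      then have "le w = e0" using code_inj[OF s, of "le w" e0] leE[OF w(2)] e0E by simp
      then show "w = v0" using leaf_pair[OF w(1) v0(1) w(2) v0(2)] unfolding e0_def by simp
    qed
    have du: "deg E u \<ge> 2"
    proof (rule ccontr)
      assume "\<not> deg E u \<ge> 2"
      then have "deg E u = 1" using degpos u(3) by force
      then have "le u = e0" using leafN e0E ue0 by blast
      then have "u = v0" using leaf_pair[OF u(3) v0(1) \<open>deg E u = 1\<close> v0(2)] unfolding e0_def by simp
      then show False using u(2) by simp
    qed
    have Nu_fin: "finite ({e\<in>E. u \<in> e} - {e0})" using fN by simp
    have Nu_card: "card ({e\<in>E. u \<in> e} - {e0}) = deg E u - 1" unfolding deg_def using e0E ue0 fN by simp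
    define fu where "fu = (SOME f. f \<in> E \<and> u \<in> f \<and> f \<noteq> e0)"
    have fu2: "deg E u = 2 \<Longrightarrow> {e\<in>E. u \<in> e} - {e0} = {fu} \<and> fu \<in> E \<and> u \<in> fu \<and> fu \<noteq> e0"
    proof -
      assume "deg E u = 2"
      then have "card ({e\<in>E. u \<in> e} - {e0}) = 1" using Nu_card by simp
      then obtain f where f: "{e\<in>E. u \<in> e} - {e0} = {f}" by (rule card_1_singletonE)
      then have "f \<in> E \<and> u \<in> f \<and> f \<noteq> e0" by blast
      then have "fu \<in> E \<and> u \<in> fu \<and> fu \<noteq> e0" unfolding fu_def by (rule someI)
      then have "fu = f" using f by blast
      then show ?thesis using f \<open>fu \<in> E \<and> u \<in> fu \<and> fu \<noteq> e0\<close> by simp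
    qed
    have tcu2: "deg E u = 2 \<Longrightarrow> tc \<P> u = card (code \<P> fu)"
    proof -
      assume d: "deg E u = 2"
      show ?thesis by (rule tc_one_edge[OF sub, of u fu "{e0}"]) (use fu2[OF d] unused in auto)
    qed
    have tcu3: "deg E u = 3 \<Longrightarrow> tc \<P> u \<ge> 1"
    proof -
      assume "deg E u = 3"
      then have "card ({e\<in>E. u \<in> e} - {e0}) = 2" using Nu_card by simp
      then obtain f g where fg: "{e\<in>E. u \<in> e} - {e0} = {f,g}" "f \<noteq> g" by (meson card_2_iff)
      show ?thesis by (rule tc_two_edges[OF fP s, of u f g "{e0}"]) (use fg unused in auto)
    qed
    define S where "S = S1 \<union> (if deg E u = 2 \<and> tc \<P> u = 1 then {u} else {})"
    have SV: "S \<subseteq> V" unfolding S_def using S1V u(3) by auto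
    have uS1: "u \<notin> S1" using du unfolding S1_def by simp
    define ed where "ed v = (if v = u then fu else le v)" for v
    have Scard: "card S \<le> card \<P>"
    proof (rule card_singleton_codes[OF fP s, of S ed])
      show "\<forall>v\<in>S. ed v \<in> E \<and> card (code \<P> (ed v)) = 1"
      proof
        fix v assume v: "v \<in> S"
        show "ed v \<in> E \<and> card (code \<P> (ed v)) = 1"
        proof (cases "v = u")
          case True
          then have "deg E u = 2" "tc \<P> u = 1" using v uS1 unfolding S_def by (auto split: if_splits)
          then show ?thesis using fu2 tcu2 True unfolding ed_def by simp
        next
          case False
          then have "v \<in> S1" using v unfolding S_def by (auto split: if_splits)
          then show ?thesis using False leE tc_leaf unfolding ed_def S1_def by auto
        qed
      qed
      show "inj_on ed S"
      proof (rule inj_onI)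
        fix v w assume v: "v \<in> S" and w: "w \<in> S" and eq: "ed v = ed w"
        have cross: "\<And>x. x \<in> S1 \<Longrightarrow> deg E u = 2 \<Longrightarrow> le x \<noteq> fu"
        proof
          fix x assume x: "x \<in> S1" "deg E u = 2" "le x = fu"
          have xv: "x \<in> V" "deg E x = 1" using x(1) unfolding S1_def by auto
          have xu: "x \<noteq> u" using x(1) uS1 by blast
          have fuu: "u \<in> fu" "fu \<in> E" using fu2[OF x(2)] by auto
          have "x \<in> fu" using leE[OF xv(2)] x(3) by simp
          then have fux: "fu = {u,x}" using edge2[OF fuu(2) fuu(1)] xu by auto
          have "\<forall>y\<in>{v0,u,x}. \<forall>e\<in>E. y \<in> e \<longrightarrow> e \<subseteq> {v0,u,x}"
          proof (intro ballI impI)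
            fix y e assume y: "y \<in> {v0,u,x}" and e: "e \<in> E" and ye: "y \<in> e"
            show "e \<subseteq> {v0,u,x}"
            proof -
              have "y = v0 \<or> y = u \<or> y = x" using y by simp
              then show ?thesis
              proof (elim disjE)
                assume "y = v0" then have "e = e0" using leafN[OF v0(2)] e ye unfolding e0_def by blast
                then show ?thesis using u(1) by auto
              next
                assume "y = u" then have "e \<in> {e\<in>E. u \<in> e}" using e ye by simp
                then have "e = e0 \<or> e = fu" using fu2[OF x(2)] by blast
                then show ?thesis using u(1) fux by auto
              next
                assume "y = x" then have "e = le x" using leafN[OF xv(2)] e ye by blast
                then show ?thesis using x(3) fux by auto
              qed
            qed
          qed
          moreover have "card {v0,u,x} \<le> 3" by (simp add: card_insert_le_m1)
          ultimately show False using small[of "{v0,u,x}"] v0(1) u(3) xv(1) by simp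
        qed
        show "v = w"
        proof (cases "v = u")
          case True
          then have d2: "deg E u = 2" using v uS1 unfolding S_def by (auto split: if_splits)
          show ?thesis
          proof (rule ccontr)
            assume "v \<noteq> w"
            then have "w \<noteq> u" using True by simp
            then have "w \<in> S1" using w unfolding S_def by (auto split: if_splits)
            moreover have "le w = fu" using eq True \<open>w \<noteq> u\<close> unfolding ed_def by simp
            ultimately show False using cross d2 by blast
          qed
        next
          case False
          then have vS1: "v \<in> S1" using v unfolding S_def by (auto split: if_splits)
          show ?thesis
          proof (cases "w = u")
            case True
            then have d2: "deg E u = 2" using w uS1 unfolding S_def by (auto split: if_splits)
            have "le v = fu" using eq True False unfolding ed_def by simp
            then show ?thesis using cross[OF vS1 d2] by simp
          next
            case wF: False
            then have wS1: "w \<in> S1" using w unfolding S_def by (auto split: if_splits)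
            have "le v = le w" using eq False wF unfolding ed_def by simp
            then show ?thesis using leaf_pair[of v w] vS1 wS1 unfolding S1_def by simp
          qed
        qed
      qed
    qed
    have ineq: "\<forall>v\<in>V. 3 - int (deg E v) + (if v = u then 1 else 0)
        \<le> int (tc \<P> v) + (if v \<in> S then 1 else 0) + (if v = v0 then 2 else 0)"
    proof
      fix v assume v: "v \<in> V"
      show "3 - int (deg E v) + (if v = u then 1 else 0)
        \<le> int (tc \<P> v) + (if v \<in> S then 1 else 0) + (if v = v0 then 2 else 0)"
      proof (cases "v = v0")
        case True then show ?thesis using v0 u(2) by auto
      next
        case nv0: False
        show ?thesis
        proof (cases "v = u")
          case True
          consider "deg E u = 2" | "deg E u = 3" | "deg E u \<ge> 4" using du by force
          then show ?thesis
          proof cases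
            case 1
            have "tc \<P> u \<ge> 1" using tc_deg2[OF 1] .
            then show ?thesis using True nv0 1 unfolding S_def by auto
          next
            case 2 then show ?thesis using tcu3[OF 2] True nv0 by auto
          next
            case 3 then show ?thesis using True nv0 by auto
          qed
        next
          case nu: False
          consider "deg E v = 1" | "deg E v = 2" | "deg E v \<ge> 3" using degpos v by force
          then show ?thesis
          proof cases
            case 1
            then have "tc \<P> v \<noteq> 0" using Z1 v nv0 by blast
            then show ?thesis using 1 v nu nv0 unfolding S_def S1_def by auto
          next
            case 2 then show ?thesis using tc_deg2[OF 2] nu nv0 by simp
          next
            case 3 then show ?thesis using nu nv0 by simp
          qed
        qed
      qed
    qed
    have d1: "(\<Sum>v\<in>V. 3 - int (deg E v) + (if v = u then 1 else 0))
       = (\<Sum>v\<in>V. 3 - int (deg E v)) + (\<Sum>v\<in>V. if v = u then 1 else 0)" by (rule sum.distrib)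
    have d2: "(\<Sum>v\<in>V. if v = u then (1::int) else 0) = 1" using u(3) fV by simp
    have d3: "(\<Sum>v\<in>V. int (tc \<P> v) + (if v \<in> S then 1 else 0) + (if v = v0 then 2 else 0))
       = (\<Sum>v\<in>V. int (tc \<P> v) + (if v \<in> S then 1 else 0)) + (\<Sum>v\<in>V. if v = v0 then 2 else 0)"
      by (rule sum.distrib)
    have d4: "(\<Sum>v\<in>V. int (tc \<P> v) + (if v \<in> S then 1 else 0))
       = (\<Sum>v\<in>V. int (tc \<P> v)) + (\<Sum>v\<in>V. if v \<in> S then 1 else 0)" by (rule sum.distrib)
    have d5: "(\<Sum>v\<in>V. if v = v0 then (2::int) else 0) = 2" using v0(1) fV by simp
    have d6: "(\<Sum>v\<in>V. int (tc \<P> v)) = int (\<Sum>v\<in>V. tc \<P> v)" by (simp add: of_nat_sum)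
    have mono: "(\<Sum>v\<in>V. 3 - int (deg E v) + (if v = u then 1 else 0))
        \<le> (\<Sum>v\<in>V. int (tc \<P> v) + (if v \<in> S then 1 else 0) + (if v = v0 then 2 else 0))"
      by (rule sum_mono) (use ineq in blast)
    have "int (card V) + 3 \<le> int (\<Sum>v\<in>V. tc \<P> v) + int (card S) + 2"
      using mono unfolding d1 d3 d4 d2 d5 d6 LHS sum_indicator_int[OF fV SV] by simp
    then show ?thesis using sumtc Scard by linarith
  qed
qed


definition starV :: "nat \<Rightarrow> nat set" where "starV N = {..N}"
definition starE :: "nat \<Rightarrow> nat set set" where "starE N = (\<lambda>i. {0, i}) ` {1..N}"

lemma star_tree: "is_tree (starV N) (starE N)"
proof (induction N)
  case 0
  have "starV 0 = {0}" "starE 0 = {}" unfolding starV_def starE_def by auto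
  then show ?case using tree_single by simp
next
  case (Suc N)
  have "starV (Suc N) = insert (Suc N) (starV N)" unfolding starV_def by auto
  moreover have "starE (Suc N) = insert {0, Suc N} (starE N)" unfolding starE_def
    by (simp add: atLeastAtMostSuc_conv)
  moreover have "(0::nat) \<in> starV N" "Suc N \<notin> starV N" unfolding starV_def by auto
  ultimately show ?case using tree_add_leaf[OF Suc.IH] by simp
qed

lemma star_card_V: "card (starV N) = N + 1" unfolding starV_def by simp

lemma star_card_E: "card (starE N) = N"
proof -
  have "inj_on (\<lambda>i. {0::nat, i}) {1..N}" by (rule inj_onI) (auto simp: doubleton_eq_iff)
  then show ?thesis unfolding starE_def by (simp add: card_image)
qed

lemma star_edge_0: "e \<in> starE N \<Longrightarrow> 0 \<in> e" unfolding starE_def by auto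

lemma star_path_card:
  assumes "is_path_edge_set (starV N) (starE N) P"
  shows "card P \<le> 2"
proof -
  obtain vs where vs: "is_vpath (starV N) (starE N) vs" "P = path_edges vs"
    using assms unfolding is_path_edge_set_def by blast
  have "length vs \<le> 3"
  proof (rule ccontr)
    assume "\<not> length vs \<le> 3"
    then have l: "3 < length vs" by simp
    have "{vs ! 0, vs ! Suc 0} \<in> starE N" using vpath_edge[OF vs(1), of 0] l by simp
    then have "0 \<in> {vs ! 0, vs ! Suc 0}" by (rule star_edge_0)
    moreover have "{vs ! 2, vs ! Suc 2} \<in> starE N" using vpath_edge[OF vs(1), of 2] l by simp
    then have "0 \<in> {vs ! 2, vs ! Suc 2}" by (rule star_edge_0)
    moreover have d: "distinct vs" using vpath_distinct[OF vs(1)] .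
    have "vs ! 0 \<noteq> vs ! 2" using l vpath_ne[OF vs(1)] nth_eq_iff_index_eq[OF d, of 0 2] by simp
    moreover have "vs ! 0 \<noteq> vs ! Suc 2" using l vpath_ne[OF vs(1)] nth_eq_iff_index_eq[OF d, of 0 "Suc 2"] by simp
    moreover have "vs ! Suc 0 \<noteq> vs ! 2" using l vpath_ne[OF vs(1)] nth_eq_iff_index_eq[OF d, of "Suc 0" 2] by simp
    moreover have "vs ! Suc 0 \<noteq> vs ! Suc 2" using l vpath_ne[OF vs(1)] nth_eq_iff_index_eq[OF d, of "Suc 0" "Suc 2"] by simp
    ultimately show False by auto
  qed
  then show ?thesis using card_path_edges[of vs] vs(2) by simp
qed

lemma star_lower:
  assumes fP: "finite \<P>" and s: "separating_path_system (starV N) (starE N) \<P>"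
  shows "2 * N \<le> 3 * card \<P> + 2"
proof -
  let ?V = "starV N" and ?E = "starE N"
  have T: "is_tree ?V ?E" using star_tree .
  have fE: "finite ?E" using tree_finite_E[OF T] .
  have paths: "\<forall>P\<in>\<P>. is_path_edge_set ?V ?E P" using s unfolding separating_path_system_def by blast
  have sub: "\<forall>P\<in>\<P>. P \<subseteq> ?E" using paths path_edge_set_sub by blast
  have "(\<Sum>e\<in>?E. card (code \<P> e)) = (\<Sum>e\<in>?E. \<Sum>P\<in>\<P>. if e \<in> P then 1 else 0)"
    unfolding code_def using fP by (simp add: card_filter_sum)
  also have "\<dots> = (\<Sum>P\<in>\<P>. \<Sum>e\<in>?E. if e \<in> P then 1 else 0)" by (rule sum.swap)
  also have "\<dots> = (\<Sum>P\<in>\<P>. card {e\<in>?E. e \<in> P})" using fE by (simp add: card_filter_sum)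
  also have "\<dots> = (\<Sum>P\<in>\<P>. card P)"
  proof (rule sum.cong)
    fix P assume "P \<in> \<P>"
    then have "{e\<in>?E. e \<in> P} = P" using sub by blast
    then show "card {e\<in>?E. e \<in> P} = card P" by simp
  qed simp
  also have "\<dots> \<le> (\<Sum>P\<in>\<P>. 2)" by (rule sum_mono) (use star_path_card paths in blast)
  finally have sumc: "(\<Sum>e\<in>?E. card (code \<P> e)) \<le> 2 * card \<P>" by simp
  define Z where "Z = {e\<in>?E. card (code \<P> e) = 0}"
  define S1 where "S1 = {e\<in>?E. card (code \<P> e) = 1}"
  have fc: "\<And>e. finite (code \<P> e)" unfolding code_def using fP by simp
  have Zc: "card Z \<le> 1"
  proof -
    have "\<forall>e\<in>Z. \<forall>e'\<in>Z. e = e'"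
    proof (intro ballI)
      fix e e' assume "e \<in> Z" "e' \<in> Z"
      then have "code \<P> e = {}" "code \<P> e' = {}" "e \<in> ?E" "e' \<in> ?E" unfolding Z_def using fc by auto
      then show "e = e'" using code_inj[OF s] by metis
    qed
    moreover have "finite Z" unfolding Z_def using fE by simp
    ultimately show ?thesis using card_le_Suc0_iff_eq by auto
  qed
  have S1c: "card S1 \<le> card \<P>"
    by (rule card_singleton_codes[OF fP s, of S1 id]) (auto simp: S1_def)
  have ineq: "\<forall>e\<in>?E. 2 \<le> card (code \<P> e) + (if e \<in> S1 then 1 else 0) + (if e \<in> Z then 2 else 0)"
    unfolding S1_def Z_def by auto
  have "(\<Sum>e\<in>?E. (2::nat)) \<le> (\<Sum>e\<in>?E. card (code \<P> e) + (if e \<in> S1 then 1 else 0) + (if e \<in> Z then 2 else 0))"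
    by (rule sum_mono) (use ineq in blast)
  also have "\<dots> = (\<Sum>e\<in>?E. card (code \<P> e)) + (\<Sum>e\<in>?E. if e \<in> S1 then 1 else 0) + (\<Sum>e\<in>?E. if e \<in> Z then 2 else 0)"
    by (simp add: sum.distrib)
  also have "(\<Sum>e\<in>?E. if e \<in> S1 then 1 else (0::nat)) = card S1"
    using fE by (simp add: card_filter_sum[symmetric] S1_def)
  also have "(\<Sum>e\<in>?E. if e \<in> Z then 2 else (0::nat)) = 2 * card Z"
  proof -
    have "(\<Sum>e\<in>?E. if e \<in> Z then 2 else (0::nat)) = (\<Sum>e\<in>?E. 2 * (if e \<in> Z then 1 else 0))"
      by (rule sum.cong) auto
    also have "\<dots> = 2 * card Z" using fE by (simp add: sum_distrib_left[symmetric] card_filter_sum[symmetric] Z_def)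
    finally show ?thesis .
  qed
  finally have "2 * card ?E \<le> (\<Sum>e\<in>?E. card (code \<P> e)) + card S1 + 2 * card Z" by simp
  then show ?thesis using sumc S1c Zc star_card_E[of N] by linarith
qed


definition sE :: "nat \<Rightarrow> nat set" where "sE j = {2*j, 2*j+2}"
definition pE :: "nat \<Rightarrow> nat set" where "pE i = {4*i, 4*i+1}"

lemma sE_eq[simp]: "(sE j = sE j') = (j = j')"
  unfolding sE_def by (auto simp: doubleton_eq_iff)

lemma pE_eq[simp]: "(pE i = pE i') = (i = i')"
  unfolding pE_def by (auto simp: doubleton_eq_iff)

lemma sE_pE[simp]: "sE j \<noteq> pE i" "pE i \<noteq> sE j"
proof -
  have "4*i+1 \<in> pE i" unfolding pE_def by simp
  moreover have "4*i+1 \<noteq> 2*j" "4*i+1 \<noteq> 2*j+2" by presburger+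
  then have "4*i+1 \<notin> sE j" unfolding sE_def by simp
  ultimately show "sE j \<noteq> pE i" "pE i \<noteq> sE j" by auto
qed

definition catV :: "nat \<Rightarrow> nat set" where "catV r = {v. v \<le> 4*r+1 \<and> v mod 4 \<noteq> 3}"
definition catE :: "nat \<Rightarrow> nat set set" where "catE r = sE ` {..<2*r} \<union> pE ` {..r}"

lemma catV_0: "catV 0 = {0,1}" unfolding catV_def by auto

lemma catE_0: "catE 0 = {{0,1}}" unfolding catE_def pE_def by auto

lemma catV_Suc: "catV (Suc r) = insert (4*r+5) (insert (4*r+4) (insert (4*r+2) (catV r)))"
  unfolding catV_def by (auto; presburger)

lemma catE_Suc: "catE (Suc r) = insert {4*r+4, 4*r+5} (insert {4*r+2, 4*r+4} (insert {4*r, 4*r+2} (catE r)))"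
proof -
  have "{..<2 * Suc r} = insert (2*r+1) (insert (2*r) {..<2*r})" by auto
  then have a: "sE ` {..<2 * Suc r} = insert (sE (2*r+1)) (insert (sE (2*r)) (sE ` {..<2*r}))" by simp
  have b: "pE ` {..Suc r} = insert (pE (Suc r)) (pE ` {..r})" by (simp add: atMost_Suc)
  have c: "sE (2*r+1) = {4*r+2, 4*r+4}" "sE (2*r) = {4*r, 4*r+2}" "pE (Suc r) = {4*r+4, 4*r+5}"
    unfolding sE_def pE_def by auto
  show ?thesis unfolding catE_def a b c by auto
qed

lemma cat_tree: "is_tree (catV r) (catE r)"
proof (induction r)
  case 0
  have "is_tree (insert 1 {0::nat}) (insert {0,1} {})"
    by (rule tree_add_leaf[OF tree_single]) auto
  then show ?case unfolding catV_0 catE_0 by (simp add: insert_commute)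
next
  case (Suc r)
  have m1: "4*r \<in> catV r" "4*r+2 \<notin> catV r" unfolding catV_def by auto
  have t1: "is_tree (insert (4*r+2) (catV r)) (insert {4*r, 4*r+2} (catE r))"
    by (rule tree_add_leaf[OF Suc.IH m1])
  have m2: "4*r+2 \<in> insert (4*r+2) (catV r)" "4*r+4 \<notin> insert (4*r+2) (catV r)" unfolding catV_def by auto
  have t2: "is_tree (insert (4*r+4) (insert (4*r+2) (catV r))) (insert {4*r+2, 4*r+4} (insert {4*r, 4*r+2} (catE r)))"
    by (rule tree_add_leaf[OF t1 m2])
  have m3: "4*r+4 \<in> insert (4*r+4) (insert (4*r+2) (catV r))" "4*r+5 \<notin> insert (4*r+4) (insert (4*r+2) (catV r))"
    unfolding catV_def by auto
  show ?case unfolding catV_Suc catE_Suc by (rule tree_add_leaf[OF t2 m3])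
qed

lemma cat_card: "card (catV r) = 3*r + 2"
proof (induction r)
  case 0 then show ?case unfolding catV_0 by simp
next
  case (Suc r)
  have f: "finite (catV r)" unfolding catV_def by simp
  have "4*r+2 \<notin> catV r" "4*r+4 \<notin> catV r" "4*r+5 \<notin> catV r" unfolding catV_def by auto
  then show ?case unfolding catV_Suc using Suc.IH f by simp
qed

definition sp :: "nat \<Rightarrow> nat \<Rightarrow> nat list" where "sp a b = map (\<lambda>j. 2*j) [a..<Suc b]"

lemma sp_len: "length (sp a b) = Suc b - a" unfolding sp_def by (simp del: upt_Suc)

lemma sp_nth: "i < Suc b - a \<Longrightarrow> sp a b ! i = 2 * (a + i)" unfolding sp_def by (simp del: upt_Suc)

lemma sp_ne: "a \<le> b \<Longrightarrow> sp a b \<noteq> []" unfolding sp_def by simp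

lemma pe_sp: "path_edges (sp a b) = sE ` {a..<b}"
proof (intro set_eqI iffI)
  fix e assume "e \<in> path_edges (sp a b)"
  then obtain i where i: "e = {sp a b ! i, sp a b ! Suc i}" "Suc i < length (sp a b)"
    unfolding path_edges_def by blast
  then have l: "Suc i < Suc b - a" using sp_len by simp
  then have "e = {2*(a+i), 2*(a + Suc i)}" using i(1) sp_nth[of i b a] sp_nth[of "Suc i" b a] by simp
  then have "e = sE (a+i)" unfolding sE_def by simp
  moreover have "a + i < b" using l by simp
  ultimately show "e \<in> sE ` {a..<b}" by auto
next
  fix e assume "e \<in> sE ` {a..<b}"
  then obtain j where j: "e = sE j" "a \<le> j" "j < b" by auto
  have l: "Suc (j - a) < Suc b - a" using j by simp
  have "sp a b ! (j - a) = 2*j" using sp_nth[of "j - a" b a] j by simp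
  moreover have "sp a b ! Suc (j - a) = 2*j+2" using sp_nth[of "Suc (j - a)" b a] j l by simp
  ultimately have "e = {sp a b ! (j - a), sp a b ! Suc (j - a)}" using j(1) unfolding sE_def by simp
  moreover have "Suc (j - a) < length (sp a b)" using l sp_len by simp
  ultimately show "e \<in> path_edges (sp a b)" unfolding path_edges_def by blast
qed

lemma sp_odd: "4*i+1 \<notin> set (sp a b)"
proof
  assume "4*i+1 \<in> set (sp a b)"
  then obtain j where "4*i+1 = 2*j" unfolding sp_def by auto
  then show False by presburger
qed

lemma sp_set: "set (sp a b) = (\<lambda>j. 2*j) ` {a..b}" unfolding sp_def by auto

lemma sp_hd: "a \<le> b \<Longrightarrow> hd (sp a b) = 2*a" unfolding sp_def by (simp add: hd_map upt_rec)

lemma sp_last: "a \<le> b \<Longrightarrow> last (sp a b) = 2*b" unfolding sp_def by (simp add: last_map)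

lemma sp_vpath:
  assumes "a \<le> b" "b \<le> 2*r"
  shows "is_vpath (catV r) (catE r) (sp a b)"
proof (rule is_vpathI)
  show "sp a b \<noteq> []" using assms unfolding sp_def by simp
  show "set (sp a b) \<subseteq> catV r" using assms unfolding sp_set catV_def by auto presburger
  show "path_edges (sp a b) \<subseteq> catE r" unfolding pe_sp catE_def using assms by auto
  show "distinct (sp a b)" unfolding sp_def by (simp add: distinct_map inj_on_def)
qed

definition Qlist :: "nat \<Rightarrow> nat \<Rightarrow> nat list" where
  "Qlist r i = (if i = 0 then sp 0 (min 3 (2*r)) else (4*i+1) # sp (2*i) (min (2*i+3) (2*r)))"

definition Llist :: "nat \<Rightarrow> nat list" where "Llist r = sp 1 (2*r) @ [4*r+1]"

lemma pe_Q:
  assumes "i < r"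
  shows "path_edges (Qlist r i) = (if i = 0 then {} else {pE i}) \<union> sE ` {2*i..<min (2*i+3) (2*r)}"
proof (cases "i = 0")
  case True then show ?thesis unfolding Qlist_def by (simp add: pe_sp)
next
  case False
  have "sp (2*i) (min (2*i+3) (2*r)) \<noteq> []" using assms by (intro sp_ne) simp
  moreover have "hd (sp (2*i) (min (2*i+3) (2*r))) = 4*i" using assms by (simp add: sp_hd)
  ultimately show ?thesis using False unfolding Qlist_def
    by (simp add: path_edges_Cons pe_sp pE_def insert_commute)
qed

lemma pe_L:
  assumes "1 \<le> r"
  shows "path_edges (Llist r) = insert (pE r) (sE ` {1..<2*r})"
proof -
  have "sp 1 (2*r) \<noteq> []" using assms by (intro sp_ne) simp
  moreover have "last (sp 1 (2*r)) = 4*r" using assms by (simp add: sp_last)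
  ultimately show ?thesis unfolding Llist_def by (simp add: path_edges_append pe_sp pE_def)
qed

lemma Q_vpath:
  assumes "i < r"
  shows "is_vpath (catV r) (catE r) (Qlist r i)"
proof (cases "i = 0")
  case True then show ?thesis unfolding Qlist_def using sp_vpath[of 0 "min 3 (2*r)" r] by simp
next
  case False
  have v: "is_vpath (catV r) (catE r) (sp (2*i) (min (2*i+3) (2*r)))" by (rule sp_vpath) (use assms in auto)
  have "4*i+1 \<in> catV r" using assms unfolding catV_def by auto
  moreover have "4*i+1 \<notin> set (sp (2*i) (min (2*i+3) (2*r)))" by (rule sp_odd)
  moreover have "{4*i+1, hd (sp (2*i) (min (2*i+3) (2*r)))} \<in> catE r"
  proof -
    have "hd (sp (2*i) (min (2*i+3) (2*r))) = 4*i" using assms by (simp add: sp_hd)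
    then have "{4*i+1, hd (sp (2*i) (min (2*i+3) (2*r)))} = pE i" unfolding pE_def by auto
    then show ?thesis unfolding catE_def using assms by auto
  qed
  ultimately show ?thesis using vpath_Cons[OF v] False unfolding Qlist_def by simp
qed

lemma L_vpath:
  assumes "1 \<le> r"
  shows "is_vpath (catV r) (catE r) (Llist r)"
proof -
  have v: "is_vpath (catV r) (catE r) (sp 1 (2*r))" by (rule sp_vpath) (use assms in auto)
  have "4*r+1 \<in> catV r" unfolding catV_def by auto
  moreover have "4*r+1 \<notin> set (sp 1 (2*r))" by (rule sp_odd)
  moreover have "{last (sp 1 (2*r)), 4*r+1} \<in> catE r"
  proof -
    have "{last (sp 1 (2*r)), 4*r+1} = pE r" using assms unfolding pE_def by (simp add: sp_last)
    then show ?thesis unfolding catE_def by auto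
  qed
  ultimately show ?thesis using vpath_snoc[OF v] unfolding Llist_def by simp
qed


definition catP :: "nat \<Rightarrow> nat set set set" where
  "catP r = insert (path_edges (Llist r)) ((\<lambda>i. path_edges (Qlist r i)) ` {..<r})"

lemma catE_cases: "e \<in> catE r \<Longrightarrow> (\<exists>j<2*r. e = sE j) \<or> (\<exists>i\<le>r. e = pE i)"
  unfolding catE_def by auto

lemma mQ_s: "i < r \<Longrightarrow> (sE j \<in> path_edges (Qlist r i)) = (2*i \<le> j \<and> j < min (2*i+3) (2*r))"
  by (auto simp: pe_Q)

lemma mQ_p: "i < r \<Longrightarrow> (pE k \<in> path_edges (Qlist r i)) = (i \<noteq> 0 \<and> k = i)"
  by (auto simp: pe_Q)

lemma mL_s: "1 \<le> r \<Longrightarrow> (sE j \<in> path_edges (Llist r)) = (1 \<le> j \<and> j < 2*r)"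
  by (auto simp: pe_L)

lemma mL_p: "1 \<le> r \<Longrightarrow> (pE k \<in> path_edges (Llist r)) = (k = r)"
  by (auto simp: pe_L)

lemma cat_sep_ss:
  assumes r: "1 \<le> r" and jj: "j < j'" "j' < 2*r"
  shows "\<exists>P\<in>catP r. (sE j \<in> P) \<noteq> (sE j' \<in> P)"
proof (cases "j = 0")
  case True
  have "path_edges (Llist r) \<in> catP r" unfolding catP_def by (rule insertI1)
  moreover have "sE j' \<in> path_edges (Llist r)" "sE j \<notin> path_edges (Llist r)"
    using mL_s[OF r] True jj by auto
  ultimately show ?thesis by blast
next
  case False
  define i where "i = j' div 2"
  have d: "2*i \<le> j'" "j' < 2*i+2" unfolding i_def by presburger+
  have ir: "i < r" using jj d by linarith
  have Qin: "\<And>t. t < r \<Longrightarrow> path_edges (Qlist r t) \<in> catP r" unfolding catP_def by (intro insertI2 imageI) simp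
  have j'Q: "sE j' \<in> path_edges (Qlist r i)" using mQ_s[OF ir] jj d by simp
  show ?thesis
  proof (cases "j < 2*i")
    case True
    then have "sE j \<notin> path_edges (Qlist r i)" using mQ_s[OF ir] by simp
    then show ?thesis using j'Q Qin[OF ir] by blast
  next
    case nt: False
    then have eq: "j = 2*i" "j' = 2*i+1" using jj d by linarith+
    then have "i \<noteq> 0" using False by simp
    then obtain t where t: "i = Suc t" by (cases i) auto
    have ir': "t < r" using ir t by simp
    have c1: "2*t \<le> j" "j < 2*t+3" "j < 2*r" using eq t jj by simp_all
    have c2: "\<not> j' < 2*t+3" using eq t by simp
    have "sE j \<in> path_edges (Qlist r t)" using mQ_s[OF ir'] c1 by simp
    moreover have "sE j' \<notin> path_edges (Qlist r t)" using mQ_s[OF ir'] c2 by simp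
    ultimately show ?thesis using Qin[OF ir'] by blast
  qed
qed

lemma cat_sep_sp:
  assumes r: "1 \<le> r" and j: "j < 2*r" and k: "k \<le> r"
  shows "\<exists>P\<in>catP r. (sE j \<in> P) \<noteq> (pE k \<in> P)"
proof -
  have Qin: "\<And>t. t < r \<Longrightarrow> path_edges (Qlist r t) \<in> catP r" unfolding catP_def by (intro insertI2 imageI) simp
  have Lin: "path_edges (Llist r) \<in> catP r" unfolding catP_def by (rule insertI1)
  show ?thesis
  proof (cases "j = 0")
    case True
    have r0: "0 < r" using r by simp
    have "sE j \<in> path_edges (Qlist r 0)" using mQ_s[OF r0] True r by auto
    moreover have "pE k \<notin> path_edges (Qlist r 0)" using mQ_p[OF r0] by simp
    ultimately show ?thesis using Qin[OF r0] by blast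
  next
    case False
    show ?thesis
    proof (cases "k = r")
      case False
      have "sE j \<in> path_edges (Llist r)" using mL_s[OF r] \<open>j \<noteq> 0\<close> j by simp
      moreover have "pE k \<notin> path_edges (Llist r)" using mL_p[OF r] False by simp
      ultimately show ?thesis using Lin by blast
    next
      case True
      define i where "i = j div 2"
      have d: "2*i \<le> j" "j < 2*i+2" unfolding i_def by presburger+
      have ir: "i < r" using j d by linarith
      have "sE j \<in> path_edges (Qlist r i)" using mQ_s[OF ir] j d by simp
      moreover have "pE k \<notin> path_edges (Qlist r i)" using mQ_p[OF ir] True ir by simp
      ultimately show ?thesis using Qin[OF ir] by blast
    qed
  qed
qed

lemma cat_sep_pp:
  assumes r: "1 \<le> r" and kk: "k \<le> r" "k' \<le> r" "k \<noteq> k'" "k \<noteq> 0"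
  shows "\<exists>P\<in>catP r. (pE k \<in> P) \<noteq> (pE k' \<in> P)"
proof -
  have Qin: "\<And>t. t < r \<Longrightarrow> path_edges (Qlist r t) \<in> catP r" unfolding catP_def by (intro insertI2 imageI) simp
  have Lin: "path_edges (Llist r) \<in> catP r" unfolding catP_def by (rule insertI1)
  show ?thesis
  proof (cases "k = r \<or> k' = r")
    case True
    then have "(pE k \<in> path_edges (Llist r)) \<noteq> (pE k' \<in> path_edges (Llist r))"
      using mL_p[OF r] kk by auto
    then show ?thesis using Lin by blast
  next
    case False
    then have kr: "k < r" using kk by simp
    have "pE k \<in> path_edges (Qlist r k)" "pE k' \<notin> path_edges (Qlist r k)" using mQ_p[OF kr] kk by auto
    then show ?thesis using Qin[OF kr] by blast
  qed
qed

lemma cat_system: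
  assumes r: "1 \<le> r"
  shows "finite (catP r) \<and> separating_path_system (catV r) (catE r) (catP r) \<and> card (catP r) \<le> r + 1"
proof (intro conjI)
  show "finite (catP r)" unfolding catP_def by simp
  show "card (catP r) \<le> r + 1"
  proof -
    have "card (catP r) \<le> Suc (card ((\<lambda>i. path_edges (Qlist r i)) ` {..<r}))"
      unfolding catP_def by (rule card_insert_le_m1) (simp_all add: card_insert_if)
    also have "card ((\<lambda>i. path_edges (Qlist r i)) ` {..<r}) \<le> r"
      using card_image_le[of "{..<r}" "\<lambda>i. path_edges (Qlist r i)"] by simp
    finally show ?thesis by simp
  qed
  show "separating_path_system (catV r) (catE r) (catP r)"
    unfolding separating_path_system_def
  proof (intro conjI ballI impI)
    fix P assume "P \<in> catP r"
    then show "is_path_edge_set (catV r) (catE r) P"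
      unfolding catP_def is_path_edge_set_def using Q_vpath L_vpath[OF r] by blast
  next
    fix e e' assume e: "e \<in> catE r" and e': "e' \<in> catE r" and ne: "e \<noteq> e'"
    have sym: "\<And>x y. (\<exists>P\<in>catP r. (x \<in> P) \<noteq> (y \<in> P)) \<Longrightarrow> (\<exists>P\<in>catP r. (y \<in> P) \<noteq> (x \<in> P))" by metis
    show "\<exists>P\<in>catP r. (e \<in> P) \<noteq> (e' \<in> P)"
    proof (cases "\<exists>j<2*r. e = sE j")
      case True
      then obtain j where j: "j < 2*r" "e = sE j" by blast
      show ?thesis
      proof (cases "\<exists>j'<2*r. e' = sE j'")
        case True
        then obtain j' where j': "j' < 2*r" "e' = sE j'" by blast
        have "j \<noteq> j'" using ne j j' by simp
        then consider "j < j'" | "j' < j" by linarith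
        then show ?thesis
        proof cases
          case 1 then show ?thesis using cat_sep_ss[OF r 1 j'(1)] j j' by simp
        next
          case 2 then show ?thesis using sym[OF cat_sep_ss[OF r 2 j(1)]] j j' by simp
        qed
      next
        case False
        then obtain k where k: "k \<le> r" "e' = pE k" using catE_cases[OF e'] by blast
        then show ?thesis using cat_sep_sp[OF r j(1) k(1)] j by simp
      qed
    next
      case False
      then obtain k where k: "k \<le> r" "e = pE k" using catE_cases[OF e] by blast
      show ?thesis
      proof (cases "\<exists>j'<2*r. e' = sE j'")
        case True
        then obtain j' where j': "j' < 2*r" "e' = sE j'" by blast
        then show ?thesis using sym[OF cat_sep_sp[OF r j'(1) k(1)]] k by simp
      next
        case False
        then obtain k' where k': "k' \<le> r" "e' = pE k'" using catE_cases[OF e'] by blast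
        have kk: "k \<noteq> k'" using ne k k' by simp
        show ?thesis
        proof (cases "k = 0")
          case False then show ?thesis using cat_sep_pp[OF r k(1) k'(1) kk False] k k' by simp
        next
          case True
          then have "k' \<noteq> 0" using kk by simp
          then show ?thesis using sym[OF cat_sep_pp[OF r k'(1) k(1) _ \<open>k' \<noteq> 0\<close>]] kk k k' by simp
        qed
      qed
    qed
  qed
qed


lemma f_sep_exact:
  assumes T: "is_tree V E"
  obtains \<P> where "finite \<P>" "card \<P> = f_sep V E" "separating_path_system V E \<P>"
proof -
  obtain \<P>0 where "finite \<P>0" "separating_path_system V E \<P>0" using upper_system[OF T] by blast
  then show ?thesis using f_sep_witness that by blast
qed

lemma part1:
  assumes T: "is_tree V E" and n: "card V \<ge> 4"
  shows "card V + 1 \<le> 3 * f_sep V E" "3 * f_sep V E \<le> 2 * (card V - 1)"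
proof -
  obtain \<P> where P: "finite \<P>" "card \<P> = f_sep V E" "separating_path_system V E \<P>"
    using f_sep_exact[OF T] by blast
  show "card V + 1 \<le> 3 * f_sep V E" using lower_bound[OF T n P(1,3)] P(2) by simp
  show "3 * f_sep V E \<le> 2 * (card V - 1)" using f_sep_upper[OF T] tree_card_E[OF T] by simp
qed

theorem theorem1p6:
  shows "(\<forall>(V::'a set) E. is_tree V E \<and> card V \<ge> 4 \<longrightarrow>
            \<lceil>(real (card V) + 1) / 3\<rceil> \<le> int (f_sep V E) \<and>
            int (f_sep V E) \<le> \<lfloor>2 * (real (card V) - 1) / 3\<rfloor>)
       \<and> (\<forall>N. \<exists>(V::nat set) E. is_tree V E \<and> card V \<ge> 4 \<and> card V \<ge> N \<and>
            int (f_sep V E) = \<lceil>(real (card V) + 1) / 3\<rceil>)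
       \<and> (\<forall>N. \<exists>(V::nat set) E. is_tree V E \<and> card V \<ge> 4 \<and> card V \<ge> N \<and>
            int (f_sep V E) = \<lfloor>2 * (real (card V) - 1) / 3\<rfloor>)"
proof (intro conjI allI impI)
  fix V :: "'a set" and E
  assume a: "is_tree V E \<and> card V \<ge> 4"
  then have T: "is_tree V E" and n: "card V \<ge> 4" by auto
  have l: "real (card V) + 1 \<le> 3 * real (f_sep V E)" using part1(1)[OF T n] by linarith
  have u: "3 * real (f_sep V E) \<le> 2 * (real (card V) - 1)" using part1(2)[OF T n] n
    by (simp add: of_nat_diff)
  show "\<lceil>(real (card V) + 1) / 3\<rceil> \<le> int (f_sep V E)"
    by (rule ceiling_le) (use l in simp)
  show "int (f_sep V E) \<le> \<lfloor>2 * (real (card V) - 1) / 3\<rfloor>"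
    by (subst le_floor_iff) (use u in simp)
next
  fix N :: nat
  define r where "r = max 1 N"
  have r1: "1 \<le> r" and rN: "N \<le> r" unfolding r_def by auto
  let ?V = "catV r" and ?E = "catE r"
  have T: "is_tree ?V ?E" by (rule cat_tree)
  have c: "card ?V = 3*r + 2" by (rule cat_card)
  have n: "card ?V \<ge> 4" using c r1 by simp
  have sys: "finite (catP r) \<and> separating_path_system ?V ?E (catP r) \<and> card (catP r) \<le> r + 1"
    by (rule cat_system[OF r1])
  have f1: "f_sep ?V ?E \<le> r + 1" using f_sep_le[of "catP r" ?V ?E] sys by simp
  have f2: "r + 1 \<le> f_sep ?V ?E" using part1(1)[OF T n] c by simp
  have f: "f_sep ?V ?E = r + 1" using f1 f2 by simp
  have "(real (card ?V) + 1) / 3 = real (r + 1)" using c by simp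
  then have "\<lceil>(real (card ?V) + 1) / 3\<rceil> = int (r + 1)" by (simp only: ceiling_of_nat)
  then have "\<lceil>(real (card ?V) + 1) / 3\<rceil> = int (f_sep ?V ?E)" using f by simp
  moreover have "card ?V \<ge> N" using c rN by simp
  ultimately show "\<exists>(V::nat set) E. is_tree V E \<and> card V \<ge> 4 \<and> card V \<ge> N \<and>
            int (f_sep V E) = \<lceil>(real (card V) + 1) / 3\<rceil>" using T n by metis
next
  fix N :: nat
  define M where "M = max 3 N"
  have M3: "3 \<le> M" and MN: "N \<le> M" unfolding M_def by auto
  let ?V = "starV M" and ?E = "starE M"
  have T: "is_tree ?V ?E" by (rule star_tree)
  have c: "card ?V = M + 1" by (rule star_card_V)
  have n: "card ?V \<ge> 4" using c M3 by simp
  obtain \<P> where P: "finite \<P>" "card \<P> = f_sep ?V ?E" "separating_path_system ?V ?E \<P>"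
    using f_sep_exact[OF T] by blast
  have lo: "2 * M \<le> 3 * f_sep ?V ?E + 2" using star_lower[OF P(1,3)] P(2) by simp
  have up: "3 * f_sep ?V ?E \<le> 2 * M" using part1(2)[OF T n] c by simp
  have x: "2 * (real (card ?V) - 1) / 3 = 2 * real M / 3" using c by simp
  have "int (f_sep ?V ?E) \<le> \<lfloor>2 * (real (card ?V) - 1) / 3\<rfloor>"
    unfolding x by (subst le_floor_iff) (use up in simp)
  moreover have "\<lfloor>2 * (real (card ?V) - 1) / 3\<rfloor> \<le> int (f_sep ?V ?E)"
  proof -
    have "2 * real M \<le> 3 * real (f_sep ?V ?E) + 2" using lo by linarith
    then have "2 * real M / 3 < real_of_int (int (f_sep ?V ?E)) + 1" by simp
    then show ?thesis unfolding x by (subst floor_le_iff) simp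
  qed
  ultimately have "int (f_sep ?V ?E) = \<lfloor>2 * (real (card ?V) - 1) / 3\<rfloor>" by simp
  moreover have "card ?V \<ge> N" using c MN by simp
  ultimately show "\<exists>(V::nat set) E. is_tree V E \<and> card V \<ge> 4 \<and> card V \<ge> N \<and>
            int (f_sep V E) = \<lfloor>2 * (real (card V) - 1) / 3\<rfloor>" using T n by metis
qed


end
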